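(* (1) For any binary operator $\Box$ on a set $\mathbb D$, any (possibly infinite) system of pure equations $x=f_x$ ($x\in X$), any initial mapping $\rho_0:X\to\mathbb D$ and any unknown $x_0$, if algorithm SLR$_1$ (defined below) terminates, then it returns a partial $\Box$-solution $(\mathsf{dom},\rho)$ with $x_0\in\mathsf{dom}$. (2) If $\mathbb D$ is a directed set, every right-hand side is monotonic, and $\Box=\boxdot$, then for any initial mapping $\rho_0$ and any $x_0$, SLR$_1$ terminates (and thus returns a partial post solution containing $x_0$ in its domain) whenever only finitely many unknowns are ever added to $\mathsf{dom}$ during the run.
   Context: A right-hand side $f$ is pure if it is given as a finite-depth (well-founded) query tree: either $\mathsf{Return}(d)$ with $d\in\mathbb D$, or $\mathsf{Query}(y,k)$ with $y\in X$ and $k:\mathbb D\to$ tree; $f$ is evaluated w.r.t. a lookup function $g:X\to\mathbb D$ by answering each query $y$ with $g(y)$ until a value is returned; $f\rho$ denotes evaluation with $g=\rho$, and $\mathsf{dep}_x\rho$ is the set of unknowns queried when evaluating $f_x\rho$. A partial $\Box$-solution is a pair of a set $\mathsf{dom}\subseteq X$ and $\rho:\mathsf{dom}\to\mathbb D$ such that for all $x\in\mathsf{dom}$: $\mathsf{dep}_x\rho\subseteq\mathsf{dom}$ and $\rho[x]=\rho[x]\,\Box\, f_x\rho$. (Partial post solution: same but $\rho[x]\sqsupseteq f_x\rho$.) Monotonic: $\rho\sqsubseteq\rho'$ pointwise (total maps) implies $f_x\rho\sqsubseteq f_x\rho'$. Algorithm SLR$_1$: global state: set $\mathsf{dom}$,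 map $\rho$ on $\mathsf{dom}$, integer $\mathsf{count}$, map $\mathsf{key}:\mathsf{dom}\to\mathbb Z$, map $\mathsf{infl}$ from unknowns to sets of unknowns (default $\emptyset$), set $\mathsf{stable}$, priority queue $Q$ keyed by $\mathsf{key}$ (no duplicates). $\mathsf{init}(y)$: $\mathsf{dom}:=\mathsf{dom}\cup\{y\}$; $\mathsf{key}[y]:=-\mathsf{count}$; $\mathsf{count}:=\mathsf{count}+1$; $\mathsf{infl}[y]:=\{y\}$; $\rho[y]:=\rho_0[y]$. $\mathsf{eval}(x,y)$: if $y\notin\mathsf{dom}$ then $\mathsf{init}(y)$; $\mathsf{solve}(y)$; end; $\mathsf{infl}[y]:=\mathsf{infl}[y]\cup\{x\}$; return $\rho[y]$. $\mathsf{solve}(x)$: if $x\notin\mathsf{stable}$ then: $\mathsf{stable}:=\mathsf{stable}\cup\{x\}$; $tmp:=\rho[x]\,\Box\, v$ where $v$ is the result of evaluating the tree $f_x$ answering each query $y$ by $\mathsf{eval}(x,y)$ (reading $\rho[x]$ before the evaluation); if $tmp\neq\rho[x]$ then: $W:=\mathsf{infl}[x]\cup\{x\}$; add every $y\in W$ to $Q$; $\rho[x]:=tmp$; $\mathsf{infl}[x]:=\emptyset$; $\mathsf{stable}:=\mathsf{stable}\setminus W$; while $Q\neq\emptyset$ and the minimal key in $Q$ is $\le\mathsf{key}[x]$: remove the element of $Q$ with minimal key and call $\mathsf{solve}$ on it. Main: $\mathsf{stable},\mathsf{dom}:=\emptyset$, $\mathsf{infl}$ empty, $\rho$ empty, $Q$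 empty, $\mathsf{count}:=0$; $\mathsf{init}(x_0)$; $\mathsf{solve}(x_0)$; return $(\mathsf{dom},\rho)$. Widening $\nabla$: $a\sqsubseteq a\nabla b$, $b\sqsubseteq a\nabla b$, no infinite sequence with $a_{i+1}=a_i\nabla b_i\neq a_i$ for all $i$. Narrowing $\triangle$: $b\sqsubseteq a$ implies $b\sqsubseteq a\triangle b\sqsubseteq a$, no infinite sequence with $b_i\sqsubseteq a_i$, $a_{i+1}=a_i\triangle b_i\neq a_i$ for all $i$. $a\boxdot b=a\triangle b$ if $b\sqsubseteq a$, else $a\nabla b$. *)

theory Defs
  imports Main
begin

section \<open>Pure right-hand sides: well-founded query trees\<close>

datatype ('x, 'd) qtree = Return 'd | Query 'x "'d \<Rightarrow> ('x, 'd) qtree"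

primrec tval :: "('x \<Rightarrow> 'd) \<Rightarrow> ('x, 'd) qtree \<Rightarrow> 'd" where
  "tval g (Return d) = d"
| "tval g (Query y k) = tval g (k (g y))"

primrec tdep :: "('x \<Rightarrow> 'd) \<Rightarrow> ('x, 'd) qtree \<Rightarrow> 'x set" where
  "tdep g (Return d) = {}"
| "tdep g (Query y k) = insert y (tdep g (k (g y)))"

definition partial_box_solution ::
  "('d \<Rightarrow> 'd \<Rightarrow> 'd) \<Rightarrow> ('x \<Rightarrow> ('x, 'd) qtree) \<Rightarrow> 'x set \<Rightarrow> ('x \<Rightarrow> 'd) \<Rightarrow> bool" where
  "partial_box_solution box f D \<rho> \<longleftrightarrow>
     (\<forall>x\<in>D. tdep \<rho> (f x) \<subseteq> D \<and> \<rho> x = box (\<rho> x) (tval \<rho> (f x)))"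

definition partial_post_solution ::
  "('x \<Rightarrow> ('x, 'd::order) qtree) \<Rightarrow> 'x set \<Rightarrow> ('x \<Rightarrow> 'd) \<Rightarrow> bool" where
  "partial_post_solution f D \<rho> \<longleftrightarrow>
     (\<forall>x\<in>D. tdep \<rho> (f x) \<subseteq> D \<and> tval \<rho> (f x) \<le> \<rho> x)"

definition monotonic_rhs :: "('x, 'd::order) qtree \<Rightarrow> bool" where
  "monotonic_rhs t \<longleftrightarrow> (\<forall>\<rho> \<rho>'. (\<forall>y. \<rho> y \<le> \<rho>' y) \<longrightarrow> tval \<rho> t \<le> tval \<rho>' t)"

definition directed :: "'d::order itself \<Rightarrow> bool" where
  "directed _ \<longleftrightarrow> (\<forall>a b::'d. \<exists>c. a \<le> c \<and> b \<le> c)"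

definition is_widening :: "('d::order \<Rightarrow> 'd \<Rightarrow> 'd) \<Rightarrow> bool" where
  "is_widening wid \<longleftrightarrow>
     (\<forall>a b. a \<le> wid a b \<and> b \<le> wid a b) \<and>
     \<not> (\<exists>a b :: nat \<Rightarrow> 'd. \<forall>i. a (Suc i) = wid (a i) (b i) \<and> a (Suc i) \<noteq> a i)"

definition is_narrowing :: "('d::order \<Rightarrow> 'd \<Rightarrow> 'd) \<Rightarrow> bool" where
  "is_narrowing nar \<longleftrightarrow>
     (\<forall>a b. b \<le> a \<longrightarrow> b \<le> nar a b \<and> nar a b \<le> a) \<and>
     \<not> (\<exists>a b :: nat \<Rightarrow> 'd. \<forall>i. b i \<le> a i \<and> a (Suc i) = nar (a i) (b i) \<and> a (Suc i) \<noteq> a i)"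

definition boxdot :: "('d::order \<Rightarrow> 'd \<Rightarrow> 'd) \<Rightarrow> ('d \<Rightarrow> 'd \<Rightarrow> 'd) \<Rightarrow> 'd \<Rightarrow> 'd \<Rightarrow> 'd" where
  "boxdot wid nar a b = (if b \<le> a then nar a b else wid a b)"

section \<open>Algorithm SLR1 as a small-step machine\<close>

record ('x, 'd) slr_state =
  sdom :: "'x set"
  srho :: "'x \<Rightarrow> 'd"
  scount :: nat
  skey :: "'x \<Rightarrow> int"
  sinfl :: "'x \<Rightarrow> 'x set"
  sstable :: "'x set"
  sQ :: "'x set"

text \<open>Control frames (an explicit call stack).
  FSolve x: a call solve(x) that has not started yet.
  FTree x old t: inside solve(x), evaluating the remaining tree t; old is rho[x] read before evaluation.
  FResume x old y k: inside solve(x), eval(x,y) has just returned from solve(y); continue with k.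
  FLoop x: the while loop at the end of solve(x).\<close>
datatype ('x, 'd) frame =
    FSolve 'x
  | FTree 'x 'd "('x, 'd) qtree"
  | FResume 'x 'd 'x "'d \<Rightarrow> ('x, 'd) qtree"
  | FLoop 'x

type_synonym ('x, 'd) config = "('x, 'd) frame list \<times> ('x, 'd) slr_state"

definition slr_init :: "('x \<Rightarrow> 'd) \<Rightarrow> 'x \<Rightarrow> ('x, 'd) slr_state \<Rightarrow> ('x, 'd) slr_state" where
  "slr_init \<rho>0 y s = s\<lparr> sdom := insert y (sdom s),
                        skey := (skey s)(y := - int (scount s)),
                        scount := Suc (scount s),
                        sinfl := (sinfl s)(y := {y}),
                        srho := (srho s)(y := \<rho>0 y) \<rparr>"

definition add_infl :: "'x \<Rightarrow> 'x \<Rightarrow> ('x, 'd) slr_state \<Rightarrow> ('x, 'd) slr_state" where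
  "add_infl x y s = s\<lparr> sinfl := (sinfl s)(y := insert x (sinfl s y)) \<rparr>"

definition qmin :: "('x, 'd) slr_state \<Rightarrow> 'x" where
  "qmin s = (SOME y. y \<in> sQ s \<and> (\<forall>z\<in>sQ s. skey s y \<le> skey s z))"

fun slr_step :: "('d \<Rightarrow> 'd \<Rightarrow> 'd) \<Rightarrow> ('x \<Rightarrow> ('x, 'd) qtree) \<Rightarrow> ('x \<Rightarrow> 'd)
                 \<Rightarrow> ('x, 'd) config \<Rightarrow> ('x, 'd) config option" where
  "slr_step box f \<rho>0 ([], s) = None"
| "slr_step box f \<rho>0 (FSolve x # cs, s) =
     (if x \<in> sstable s then Some (cs, s)
      else Some (FTree x (srho s x) (f x) # cs, s\<lparr> sstable := insert x (sstable s) \<rparr>))"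
| "slr_step box f \<rho>0 (FTree x old (Return v) # cs, s) =
     (let tmp = box old v in
      if tmp \<noteq> srho s x then
        (let W = insert x (sinfl s x) in
         Some (FLoop x # cs,
               s\<lparr> sQ := sQ s \<union> W, srho := (srho s)(x := tmp),
                  sinfl := (sinfl s)(x := {}), sstable := sstable s - W \<rparr>))
      else Some (cs, s))"
| "slr_step box f \<rho>0 (FTree x old (Query y k) # cs, s) =
     (if y \<notin> sdom s then Some (FSolve y # FResume x old y k # cs, slr_init \<rho>0 y s)
      else (let s' = add_infl x y s in Some (FTree x old (k (srho s' y)) # cs, s')))"
| "slr_step box f \<rho>0 (FResume x old y k # cs, s) =
     (let s' = add_infl x y s in Some (FTree x old (k (srho s' y)) # cs, s'))"
| "slr_step box f \<rho>0 (FLoop x # cs, s) =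
     (if sQ s \<noteq> {} \<and> skey s (qmin s) \<le> skey s x
      then Some (FSolve (qmin s) # FLoop x # cs, s\<lparr> sQ := sQ s - {qmin s} \<rparr>)
      else Some (cs, s))"

definition slr_start :: "('x \<Rightarrow> 'd) \<Rightarrow> 'x \<Rightarrow> ('x, 'd) config" where
  "slr_start \<rho>0 x0 =
     ([FSolve x0],
      slr_init \<rho>0 x0 \<lparr> sdom = {}, srho = \<rho>0, scount = 0, skey = (\<lambda>_. 0),
                       sinfl = (\<lambda>_. {}), sstable = {}, sQ = {} \<rparr>)"

fun slr_exec :: "('d \<Rightarrow> 'd \<Rightarrow> 'd) \<Rightarrow> ('x \<Rightarrow> ('x, 'd) qtree) \<Rightarrow> ('x \<Rightarrow> 'd)
                 \<Rightarrow> nat \<Rightarrow> ('x, 'd) config \<Rightarrow> ('x, 'd) config" where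
  "slr_exec box f \<rho>0 0 c = c"
| "slr_exec box f \<rho>0 (Suc n) c =
     (case slr_step box f \<rho>0 c of None \<Rightarrow> c | Some c' \<Rightarrow> slr_exec box f \<rho>0 n c')"

definition slr_run :: "('d \<Rightarrow> 'd \<Rightarrow> 'd) \<Rightarrow> ('x \<Rightarrow> ('x, 'd) qtree) \<Rightarrow> ('x \<Rightarrow> 'd) \<Rightarrow> 'x
                       \<Rightarrow> nat \<Rightarrow> ('x, 'd) config" where
  "slr_run box f \<rho>0 x0 n = slr_exec box f \<rho>0 n (slr_start \<rho>0 x0)"

definition slr_finished :: "('d \<Rightarrow> 'd \<Rightarrow> 'd) \<Rightarrow> ('x \<Rightarrow> ('x, 'd) qtree) \<Rightarrow> ('x \<Rightarrow> 'd) \<Rightarrow> 'x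
                       \<Rightarrow> nat \<Rightarrow> bool" where
  "slr_finished box f \<rho>0 x0 n \<longleftrightarrow> fst (slr_run box f \<rho>0 x0 n) = []"

end

theory Submission
  imports Defs
begin



fun fu :: "('x,'d) frame \<Rightarrow> 'x" where
  "fu (FSolve x) = x" | "fu (FTree x old t) = x" | "fu (FResume x old y k) = x" | "fu (FLoop x) = x"

fun fus :: "('x,'d) frame \<Rightarrow> 'x set" where
  "fus (FSolve x) = {x}" | "fus (FTree x old t) = {x}" | "fus (FResume x old y k) = {x,y}" | "fus (FLoop x) = {x}"

fun isRL :: "('x,'d) frame \<Rightarrow> bool" where
  "isRL (FSolve x) = False" | "isRL (FTree x old t) = False" | "isRL (FResume x old y k) = True" | "isRL (FLoop x) = True"

fun stk :: "('x \<Rightarrow> int) \<Rightarrow> 'x \<Rightarrow> ('x,'d) frame list \<Rightarrow> bool" where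
  "stk k x0 [] = True"
| "stk k x0 [F] = (fu F = x0)"
| "stk k x0 (F # G # rest) = (k (fu F) \<le> k (fu G) \<and> isRL G \<and>
      (\<forall>x old y kk. G = FResume x old y kk \<longrightarrow> fu F = y \<and> k y < k x) \<and> stk k x0 (G # rest))"

definition Cs :: "('x,'d) frame list \<Rightarrow> 'x set" where
  "Cs cs = {x. \<exists>old t. FTree x old t \<in> set cs} \<union> {x. \<exists>old y k. FResume x old y k \<in> set cs}"

inductive reach :: "('x \<Rightarrow> 'd) \<Rightarrow> ('x,'d) qtree \<Rightarrow> ('x,'d) qtree \<Rightarrow> 'x set \<Rightarrow> bool" for \<rho> where
  rrefl: "reach \<rho> t t {}"
| rstep: "reach \<rho> (k (\<rho> y)) t P \<Longrightarrow> reach \<rho> (Query y k) t (insert y P)"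

lemma reach_val: "reach \<rho> T t P \<Longrightarrow> tval \<rho> T = tval \<rho> t \<and> tdep \<rho> T = P \<union> tdep \<rho> t"
  by (induction rule: reach.induct) auto

lemma reach_snoc: "reach \<rho> T (Query y k) P \<Longrightarrow> reach \<rho> T (k (\<rho> y)) (insert y P)"
  by (induction T "Query y k" P rule: reach.induct) (auto intro: reach.intros simp: insert_commute)

lemma reach_cong: "reach \<rho> T t P \<Longrightarrow> (\<forall>p\<in>P. \<rho>' p = \<rho> p) \<Longrightarrow> reach \<rho>' T t P"
proof (induction rule: reach.induct)
  case (rrefl t) show ?case by (rule reach.rrefl)
next
  case (rstep k y t P) then show ?case using reach.rstep[of \<rho>' k y t P] by auto
qed

lemma tree_cong: "(\<forall>y\<in>tdep \<rho> t. \<rho>' y = \<rho> y) \<Longrightarrow> tval \<rho>' t = tval \<rho> t \<and> tdep \<rho>' t = tdep \<rho> t"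
  by (induction t) auto

lemma stk_sorted: "stk k x0 (F # rest) \<Longrightarrow> G \<in> set rest \<Longrightarrow> k (fu F) \<le> k (fu G) \<and> isRL G"
proof (induction rest arbitrary: F)
  case Nil then show ?case by simp
next
  case (Cons G' rest)
  have h: "k (fu F) \<le> k (fu G')" "isRL G'" "stk k x0 (G' # rest)" using Cons.prems(1) by simp_all
  show ?case
  proof (cases "G = G'")
    case True then show ?thesis using h by simp
  next
    case False
    then have "G \<in> set rest" using Cons.prems(2) by simp
    then have "k (fu G') \<le> k (fu G) \<and> isRL G" using Cons.IH h(3) by blast
    then show ?thesis using h by simp
  qed
qed

lemma stk_resume: "stk k x0 (F # rest) \<Longrightarrow> FResume x old y kk \<in> set rest \<Longrightarrow> k (fu F) \<le> k y \<and> k y < k x"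
proof (induction rest arbitrary: F)
  case Nil then show ?case by simp
next
  case (Cons G' rest)
  show ?case
  proof (cases "G' = FResume x old y kk")
    case True with Cons.prems(1) show ?thesis by simp
  next
    case False
    then have "FResume x old y kk \<in> set rest" using Cons.prems by simp
    moreover have "stk k x0 (G' # rest)" using Cons.prems(1) by simp
    ultimately have "k (fu G') \<le> k y \<and> k y < k x" using Cons.IH by blast
    moreover have "k (fu F) \<le> k (fu G')" using Cons.prems(1) by simp
    ultimately show ?thesis by simp
  qed
qed

lemma stk_pop: assumes "stk k x0 (F # rest)" shows "stk k x0 rest"
  using assms by (cases rest) simp_all

lemma stk_replace: assumes "stk k x0 (F # rest)" "fu F' = fu F" shows "stk k x0 (F' # rest)"
  using assms by (cases rest) simp_all

lemma stk_cong: "stk k x0 cs \<Longrightarrow> (\<forall>F\<in>set cs. \<forall>z\<in>fus F. k' z = k z) \<Longrightarrow> stk k' x0 cs"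
proof (induction k x0 cs rule: stk.induct)
  case (3 k x0 F G rest)
  have a: "k' (fu F) = k (fu F)" "k' (fu G) = k (fu G)" using 3(3) by (cases F; cases G; auto)+
  have b: "\<forall>x old y kk. G = FResume x old y kk \<longrightarrow> k' y = k y \<and> k' x = k x" using 3(3) by auto
  show ?case using 3 a b by auto
qed auto

lemma stk_last: "stk k x0 (F # rest) \<Longrightarrow> fu (last (F # rest)) = x0"
proof (induction rest arbitrary: F)
  case Nil then show ?case by simp
next
  case (Cons a rest) then show ?case by simp
qed


lemma cover:
  assumes "stk k x0 (F # rest)"
    and "\<forall>x old y kk. FResume x old y kk \<in> set rest \<longrightarrow> (\<forall>u\<in>D. k u \<le> k y \<longrightarrow> (\<forall>w\<in>I u. k w \<le> k y))"
    and "\<forall>u\<in>D. \<forall>w\<in>I u. k w \<le> k x0"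
    and "u \<in> D" "k u \<le> k (fu F)" "w \<in> I u"
  shows "k w \<le> k (fu F) \<or> (\<exists>z. FLoop z \<in> set rest \<and> k w \<le> k z)"
  using assms(1,2,5)
proof (induction rest arbitrary: F)
  case Nil then show ?case using assms(3,4,6) by simp
next
  case (Cons G rest)
  have h: "k (fu F) \<le> k (fu G)" "isRL G" "stk k x0 (G # rest)"
    "\<forall>x old y kk. G = FResume x old y kk \<longrightarrow> fu F = y \<and> k y < k x" using Cons.prems(1) by simp_all
  show ?case
  proof (cases G)
    case (FResume x old y kk)
    then have "fu F = y" using h by simp
    moreover have "FResume x old y kk \<in> set (G # rest)" using FResume by simp
    ultimately have "k w \<le> k (fu F)" using Cons.prems(2) Cons.prems(3) assms(4,6) by metis
    then show ?thesis by simp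
  next
    case (FLoop z)
    have "\<forall>x old y kk. FResume x old y kk \<in> set rest \<longrightarrow> (\<forall>u\<in>D. k u \<le> k y \<longrightarrow> (\<forall>w\<in>I u. k w \<le> k y))"
      using Cons.prems(2) by simp
    moreover have "k u \<le> k (fu G)" using Cons.prems(3) h(1) by simp
    ultimately have "k w \<le> k (fu G) \<or> (\<exists>z. FLoop z \<in> set rest \<and> k w \<le> k z)"
      using Cons.IH[OF h(3)] by blast
    then show ?thesis using FLoop by auto
  next
    case (FSolve x) then show ?thesis using h(2) by simp
  next
    case (FTree x old t) then show ?thesis using h(2) by simp
  qed
qed

lemma qmin_prop:
  assumes "finite (sQ s)" "sQ s \<noteq> {}"
  shows "qmin s \<in> sQ s \<and> (\<forall>z\<in>sQ s. skey s (qmin s) \<le> skey s z)"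
proof -
  obtain m where "m \<in> sQ s" "\<forall>z\<in>sQ s. skey s m \<le> skey s z"
  proof -
    have "finite (skey s ` sQ s)" "skey s ` sQ s \<noteq> {}" using assms by auto
    then have "Min (skey s ` sQ s) \<in> skey s ` sQ s" by (rule Min_in)
    then obtain m where m: "m \<in> sQ s" "skey s m = Min (skey s ` sQ s)" by auto
    have "\<forall>z\<in>sQ s. skey s m \<le> skey s z" using m assms by simp
    then show ?thesis using m that by blast
  qed
  then have "\<exists>y. y \<in> sQ s \<and> (\<forall>z\<in>sQ s. skey s y \<le> skey s z)" by blast
  then show ?thesis unfolding qmin_def by (rule someI_ex)
qed

definition invK :: "'x \<Rightarrow> ('x,'d) slr_state \<Rightarrow> bool" where
 "invK x0 s \<longleftrightarrow> finite (sdom s) \<and> x0 \<in> sdom s \<and> skey s x0 = 0 \<and>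
   (\<forall>u\<in>sdom s. - int (scount s) < skey s u \<and> skey s u \<le> 0) \<and> inj_on (skey s) (sdom s) \<and>
   sstable s \<subseteq> sdom s \<and> sQ s \<subseteq> sdom s \<and> (\<forall>u. sinfl s u \<subseteq> sdom s) \<and> sQ s \<inter> sstable s = {}"

definition invS :: "'x \<Rightarrow> ('x,'d) frame list \<Rightarrow> ('x,'d) slr_state \<Rightarrow> bool" where
 "invS x0 cs s \<longleftrightarrow> (\<forall>F\<in>set cs. fus F \<subseteq> sdom s) \<and> stk (skey s) x0 cs \<and>
   (\<forall>x rest. cs = FSolve x # rest \<longrightarrow> x \<notin> sQ s)"

definition invA :: "('x \<Rightarrow> ('x,'d) qtree) \<Rightarrow> ('x,'d) frame list \<Rightarrow> ('x,'d) slr_state \<Rightarrow> bool" where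
 "invA f cs s \<longleftrightarrow> (\<forall>x old y k. FResume x old y k \<in> set cs \<longrightarrow>
     (\<forall>u\<in>sdom s. skey s u \<le> skey s y \<longrightarrow> (\<forall>w\<in>sinfl s u. skey s w \<le> skey s y)) \<and>
     (\<forall>u\<in>sdom s. skey s y < skey s u \<longrightarrow> skey s u < skey s x \<longrightarrow> u \<in> sstable s) \<and>
     x \<in> sstable s \<and> old = srho s x \<and>
     (\<exists>P. reach (srho s) (f x) (Query y k) P \<and> P \<subseteq> sdom s \<and> (\<forall>p\<in>P. x \<in> sinfl s p \<and> skey s y < skey s p)))"

definition invT :: "('x \<Rightarrow> ('x,'d) qtree) \<Rightarrow> ('x,'d) frame list \<Rightarrow> ('x,'d) slr_state \<Rightarrow> bool" where
 "invT f cs s \<longleftrightarrow> (\<forall>x old t. FTree x old t \<in> set cs \<longrightarrow>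
     x \<in> sstable s \<and> old = srho s x \<and>
     (\<exists>P. reach (srho s) (f x) t P \<and> P \<subseteq> sdom s \<and> (\<forall>p\<in>P. x \<in> sinfl s p)))"

definition invI :: "('d \<Rightarrow> 'd \<Rightarrow> 'd) \<Rightarrow> ('x \<Rightarrow> ('x,'d) qtree) \<Rightarrow> ('x,'d) frame list \<Rightarrow> ('x,'d) slr_state \<Rightarrow> bool" where
 "invI box f cs s \<longleftrightarrow>
   (\<forall>u\<in>sstable s. u \<notin> Cs cs \<longrightarrow> tdep (srho s) (f u) \<subseteq> sdom s \<and>
       srho s u = box (srho s u) (tval (srho s) (f u)) \<and> (\<forall>y\<in>tdep (srho s) (f u). u \<in> sinfl s y)) \<and>
   (\<forall>u\<in>sdom s. u \<notin> sstable s \<longrightarrow> u \<in> sQ s \<or> (\<exists>rest. cs = FSolve u # rest)) \<and>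
   (\<forall>w\<in>sQ s. \<exists>z. FLoop z \<in> set cs \<and> skey s w \<le> skey s z) \<and>
   (\<forall>F rest. cs = F # rest \<longrightarrow> (\<forall>z. F \<noteq> FLoop z) \<longrightarrow> (\<forall>u\<in>sdom s. skey s u < skey s (fu F) \<longrightarrow> u \<in> sstable s))"

definition slrinv where
 "slrinv box f x0 cs s \<longleftrightarrow> invK x0 s \<and> invS x0 cs s \<and> invA f cs s \<and> invT f cs s \<and> invI box f cs s"

lemma Cs_simps[simp]:
  "Cs [] = {}"
  "Cs (FSolve x # cs) = Cs cs" "Cs (FLoop x # cs) = Cs cs"
  "Cs (FTree x old t # cs) = insert x (Cs cs)" "Cs (FResume x old y k # cs) = insert x (Cs cs)"
  unfolding Cs_def by (simp_all; blast)+

lemma rest_RL: "stk k x0 (F # rest) \<Longrightarrow> G \<in> set rest \<Longrightarrow> isRL G"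
  using stk_sorted[of k x0 F rest G] by simp

lemma rest_noTree: "stk k x0 (F # rest) \<Longrightarrow> FTree x old t \<notin> set rest"
  using rest_RL by fastforce

lemma rest_noSolve: "stk k x0 (F # rest) \<Longrightarrow> FSolve x \<notin> set rest"
  using rest_RL by fastforce


lemma invI_I1: "invI box f cs s \<Longrightarrow> u \<in> sstable s \<Longrightarrow> u \<notin> Cs cs \<Longrightarrow>
   tdep (srho s) (f u) \<subseteq> sdom s \<and> srho s u = box (srho s u) (tval (srho s) (f u)) \<and> (\<forall>y\<in>tdep (srho s) (f u). u \<in> sinfl s y)"
  unfolding invI_def by blast
lemma invI_I2: "invI box f cs s \<Longrightarrow> u \<in> sdom s \<Longrightarrow> u \<notin> sstable s \<Longrightarrow> u \<in> sQ s \<or> (\<exists>rest. cs = FSolve u # rest)"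
  unfolding invI_def by blast
lemma invI_QI: "invI box f cs s \<Longrightarrow> w \<in> sQ s \<Longrightarrow> \<exists>z. FLoop z \<in> set cs \<and> skey s w \<le> skey s z"
  unfolding invI_def by blast
lemma invI_J: "invI box f cs s \<Longrightarrow> cs = F # rest \<Longrightarrow> (\<forall>z. F \<noteq> FLoop z) \<Longrightarrow> u \<in> sdom s \<Longrightarrow> skey s u < skey s (fu F) \<Longrightarrow> u \<in> sstable s"
  unfolding invI_def by blast
lemma invI_intro:
  assumes "\<And>u. u \<in> sstable s \<Longrightarrow> u \<notin> Cs cs \<Longrightarrow>
   tdep (srho s) (f u) \<subseteq> sdom s \<and> srho s u = box (srho s u) (tval (srho s) (f u)) \<and> (\<forall>y\<in>tdep (srho s) (f u). u \<in> sinfl s y)"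
  and "\<And>u. u \<in> sdom s \<Longrightarrow> u \<notin> sstable s \<Longrightarrow> u \<in> sQ s \<or> (\<exists>rest. cs = FSolve u # rest)"
  and "\<And>w. w \<in> sQ s \<Longrightarrow> \<exists>z. FLoop z \<in> set cs \<and> skey s w \<le> skey s z"
  and "\<And>F rest u. cs = F # rest \<Longrightarrow> (\<forall>z. F \<noteq> FLoop z) \<Longrightarrow> u \<in> sdom s \<Longrightarrow> skey s u < skey s (fu F) \<Longrightarrow> u \<in> sstable s"
  shows "invI box f cs s"
  unfolding invI_def using assms by blast

lemma invA_D: "invA f cs s \<Longrightarrow> FResume x old y k \<in> set cs \<Longrightarrow>
     (\<forall>u\<in>sdom s. skey s u \<le> skey s y \<longrightarrow> (\<forall>w\<in>sinfl s u. skey s w \<le> skey s y)) \<and>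
     (\<forall>u\<in>sdom s. skey s y < skey s u \<longrightarrow> skey s u < skey s x \<longrightarrow> u \<in> sstable s) \<and>
     x \<in> sstable s \<and> old = srho s x \<and>
     (\<exists>P. reach (srho s) (f x) (Query y k) P \<and> P \<subseteq> sdom s \<and> (\<forall>p\<in>P. x \<in> sinfl s p \<and> skey s y < skey s p))"
  unfolding invA_def by blast
lemma invA_intro:
  assumes "\<And>x old y k. FResume x old y k \<in> set cs \<Longrightarrow>
     (\<forall>u\<in>sdom s. skey s u \<le> skey s y \<longrightarrow> (\<forall>w\<in>sinfl s u. skey s w \<le> skey s y)) \<and>
     (\<forall>u\<in>sdom s. skey s y < skey s u \<longrightarrow> skey s u < skey s x \<longrightarrow> u \<in> sstable s) \<and>
     x \<in> sstable s \<and> old = srho s x \<and>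
     (\<exists>P. reach (srho s) (f x) (Query y k) P \<and> P \<subseteq> sdom s \<and> (\<forall>p\<in>P. x \<in> sinfl s p \<and> skey s y < skey s p))"
  shows "invA f cs s"
  unfolding invA_def using assms by blast
lemma invT_D: "invT f cs s \<Longrightarrow> FTree x old t \<in> set cs \<Longrightarrow>
     x \<in> sstable s \<and> old = srho s x \<and> (\<exists>P. reach (srho s) (f x) t P \<and> P \<subseteq> sdom s \<and> (\<forall>p\<in>P. x \<in> sinfl s p))"
  unfolding invT_def by blast
lemma invT_intro:
  assumes "\<And>x old t. FTree x old t \<in> set cs \<Longrightarrow>
     x \<in> sstable s \<and> old = srho s x \<and> (\<exists>P. reach (srho s) (f x) t P \<and> P \<subseteq> sdom s \<and> (\<forall>p\<in>P. x \<in> sinfl s p))"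
  shows "invT f cs s"
  unfolding invT_def using assms by blast
lemma invT_none: "stk k x0 rest \<Longrightarrow> (\<forall>G\<in>set rest. isRL G) \<Longrightarrow> invT f rest s"
  unfolding invT_def by fastforce

lemma inv_parts: "slrinv box f x0 cs s \<longleftrightarrow> invK x0 s \<and> invS x0 cs s \<and> invA f cs s \<and> invT f cs s \<and> invI box f cs s"
  by (simp add: slrinv_def)

lemma invS_D: "invS x0 cs s \<Longrightarrow> (\<forall>F\<in>set cs. fus F \<subseteq> sdom s) \<and> stk (skey s) x0 cs"
  by (simp add: invS_def)





lemma invS_pop: assumes "invS x0 (F # rest) s" shows "invS x0 rest s"
proof -
  have stk: "stk (skey s) x0 (F # rest)" and fs: "\<forall>G\<in>set (F # rest). fus G \<subseteq> sdom s"
    using assms by (simp_all add: invS_def)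
  have "\<forall>x r. rest = FSolve x # r \<longrightarrow> x \<notin> sQ s"
  proof (intro allI impI)
    fix x r assume "rest = FSolve x # r"
    then have "FSolve x \<in> set rest" by simp
    then show "x \<notin> sQ s" using rest_noSolve[OF stk] by blast
  qed
  then show ?thesis unfolding invS_def using fs stk_pop[OF stk] by simp
qed

lemma J_pop:
  assumes II: "invI box f (F0 # rest) s" and A: "invA f (F0 # rest) s" and K: "invK x0 s"
    and stk: "stk (skey s) x0 (F0 # rest)" and nl0: "\<forall>z. F0 \<noteq> FLoop z"
    and xd: "fu F0 \<in> sdom s" and xs: "fu F0 \<in> sstable s"
    and r: "rest = F # r" and nl: "\<forall>z. F \<noteq> FLoop z" and u: "u \<in> sdom s" "skey s u < skey s (fu F)"
  shows "u \<in> sstable s"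
proof -
  have "isRL F" using rest_RL[OF stk] r by simp
  then obtain x' old y kk where F: "F = FResume x' old y kk" using nl by (cases F) auto
  have yx: "y = fu F0" using stk r F by simp
  have jj: "\<forall>u\<in>sdom s. skey s y < skey s u \<longrightarrow> skey s u < skey s x' \<longrightarrow> u \<in> sstable s"
    using invA_D[OF A, of x' old y kk] r F by simp
  have inj: "inj_on (skey s) (sdom s)" using K by (simp add: invK_def)
  show "u \<in> sstable s"
  proof (cases "skey s u < skey s (fu F0)")
    case True then show ?thesis using invI_J[OF II refl nl0 u(1)] by simp
  next
    case False
    show ?thesis
    proof (cases "skey s u = skey s (fu F0)")
      case True
      then have "u = fu F0" using inj xd u(1) unfolding inj_on_def by blast
      then show ?thesis using xs by simp
    next
      case False
      then have "skey s y < skey s u" using \<open>\<not> skey s u < skey s (fu F0)\<close> yx by simp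
      moreover have "skey s u < skey s x'" using u(2) F by simp
      ultimately show ?thesis using jj u(1) by blast
    qed
  qed
qed

lemma case_solve_stable:
  assumes I: "slrinv box f x0 (FSolve x # rest) s" and st: "x \<in> sstable s"
  shows "slrinv box f x0 rest s"
proof -
  have K: "invK x0 s" and S: "invS x0 (FSolve x # rest) s" and A: "invA f (FSolve x # rest) s"
    and II: "invI box f (FSolve x # rest) s" using I by (simp_all add: slrinv_def)
  have stk: "stk (skey s) x0 (FSolve x # rest)" and fs: "\<forall>F\<in>set (FSolve x # rest). fus F \<subseteq> sdom s"
    using S by (simp_all add: invS_def)
  have xd: "x \<in> sdom s" using fs by simp
  have S': "invS x0 rest s" by (rule invS_pop[OF S])
  have A': "invA f rest s" by (rule invA_intro, rule invA_D[OF A], simp)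
  have T': "invT f rest s" by (rule invT_none[OF stk_pop[OF stk]]) (use rest_RL[OF stk] in blast)
  have I': "invI box f rest s"
  proof (rule invI_intro)
    fix u assume a: "u \<in> sstable s" "u \<notin> Cs rest"
    have "u \<notin> Cs (FSolve x # rest)" using a by simp
    from invI_I1[OF II a(1) this]
    show "tdep (srho s) (f u) \<subseteq> sdom s \<and> srho s u = box (srho s u) (tval (srho s) (f u)) \<and> (\<forall>y\<in>tdep (srho s) (f u). u \<in> sinfl s y)" .
  next
    fix u assume a: "u \<in> sdom s" "u \<notin> sstable s"
    from invI_I2[OF II a] st a show "u \<in> sQ s \<or> (\<exists>r. rest = FSolve u # r)" by auto
  next
    fix w assume "w \<in> sQ s"
    from invI_QI[OF II this] show "\<exists>z. FLoop z \<in> set rest \<and> skey s w \<le> skey s z" by auto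
  next
    fix F r u assume r: "rest = F # r" and nl: "\<forall>z. F \<noteq> FLoop z" and u: "u \<in> sdom s" "skey s u < skey s (fu F)"
    show "u \<in> sstable s" by (rule J_pop[OF II A K stk _ _ _ r nl u]) (use xd st in simp_all)
  qed
  show ?thesis unfolding slrinv_def using K S' A' T' I' by simp
qed


lemma case_solve_unstable:
  assumes I: "slrinv box f x0 (FSolve x # rest) s" and st: "x \<notin> sstable s"
  shows "slrinv box f x0 (FTree x (srho s x) (f x) # rest) (s\<lparr>sstable := insert x (sstable s)\<rparr>)"
    (is "slrinv box f x0 ?cs ?s")
proof -
  have K: "invK x0 s" and S: "invS x0 (FSolve x # rest) s" and A: "invA f (FSolve x # rest) s"
    and II: "invI box f (FSolve x # rest) s" using I by (simp_all add: slrinv_def)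
  have stk: "stk (skey s) x0 (FSolve x # rest)" and fs: "\<forall>F\<in>set (FSolve x # rest). fus F \<subseteq> sdom s"
    and xq: "x \<notin> sQ s" using S by (simp_all add: invS_def)
  have xd: "x \<in> sdom s" using fs by simp
  have K': "invK x0 ?s" using K xd xq unfolding invK_def by auto
  have e: "srho ?s = srho s" "sdom ?s = sdom s" "sinfl ?s = sinfl s" "skey ?s = skey s" "sQ ?s = sQ s" by simp_all
  have S': "invS x0 ?cs ?s"
    unfolding invS_def using fs stk_replace[OF stk, of "FTree x (srho s x) (f x)"] by simp
  have A': "invA f ?cs ?s"
  proof (rule invA_intro)
    fix x' old y k assume "FResume x' old y k \<in> set ?cs"
    then have "FResume x' old y k \<in> set (FSolve x # rest)" by simp
    from invA_D[OF A this] show "(\<forall>u\<in>sdom ?s. skey ?s u \<le> skey ?s y \<longrightarrow> (\<forall>w\<in>sinfl ?s u. skey ?s w \<le> skey ?s y)) \<and>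
     (\<forall>u\<in>sdom ?s. skey ?s y < skey ?s u \<longrightarrow> skey ?s u < skey ?s x' \<longrightarrow> u \<in> sstable ?s) \<and>
     x' \<in> sstable ?s \<and> old = srho ?s x' \<and>
     (\<exists>P. reach (srho ?s) (f x') (Query y k) P \<and> P \<subseteq> sdom ?s \<and> (\<forall>p\<in>P. x' \<in> sinfl ?s p \<and> skey ?s y < skey ?s p))"
      unfolding e by auto
  qed
  have T': "invT f ?cs ?s"
  proof (rule invT_intro)
    fix x' old t assume a: "FTree x' old t \<in> set ?cs"
    have "FTree x' old t \<notin> set rest" using rest_noTree[OF stk] by blast
    then have "x' = x \<and> old = srho s x \<and> t = f x" using a by simp
    then show "x' \<in> sstable ?s \<and> old = srho ?s x' \<and> (\<exists>P. reach (srho ?s) (f x') t P \<and> P \<subseteq> sdom ?s \<and> (\<forall>p\<in>P. x' \<in> sinfl ?s p))"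
      using reach.rrefl[of "srho s" "f x"] by auto
  qed
  have I': "invI box f ?cs ?s"
  proof (rule invI_intro)
    fix u assume a: "u \<in> sstable ?s" "u \<notin> Cs ?cs"
    have "u \<in> sstable s" "u \<notin> Cs (FSolve x # rest)" using a by auto
    from invI_I1[OF II this]
    show "tdep (srho ?s) (f u) \<subseteq> sdom ?s \<and> srho ?s u = box (srho ?s u) (tval (srho ?s) (f u)) \<and> (\<forall>y\<in>tdep (srho ?s) (f u). u \<in> sinfl ?s y)" unfolding e .
  next
    fix u assume a: "u \<in> sdom ?s" "u \<notin> sstable ?s"
    then have "u \<in> sdom s" "u \<notin> sstable s" by auto
    from invI_I2[OF II this] a show "u \<in> sQ ?s \<or> (\<exists>r. ?cs = FSolve u # r)" by auto
  next
    fix w assume "w \<in> sQ ?s"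
    then have "w \<in> sQ s" by simp
    from invI_QI[OF II this] show "\<exists>z. FLoop z \<in> set ?cs \<and> skey ?s w \<le> skey ?s z" by auto
  next
    fix F r u assume r: "?cs = F # r" and nl: "\<forall>z. F \<noteq> FLoop z" and u: "u \<in> sdom ?s" "skey ?s u < skey ?s (fu F)"
    have "u \<in> sstable s" using invI_J[OF II refl, of u] u r by auto
    then show "u \<in> sstable ?s" by simp
  qed
  show ?thesis unfolding slrinv_def using K' S' A' T' I' by simp
qed

lemma case_tree_nochange:
  assumes I: "slrinv box f x0 (FTree x old (Return v) # rest) s" and nc: "box old v = srho s x"
  shows "slrinv box f x0 rest s"
proof -
  have K: "invK x0 s" and S: "invS x0 (FTree x old (Return v) # rest) s" and A: "invA f (FTree x old (Return v) # rest) s"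
    and T: "invT f (FTree x old (Return v) # rest) s"
    and II: "invI box f (FTree x old (Return v) # rest) s" using I by (simp_all add: slrinv_def)
  have stk: "stk (skey s) x0 (FTree x old (Return v) # rest)" and fs: "\<forall>F\<in>set (FTree x old (Return v) # rest). fus F \<subseteq> sdom s"
    using S by (simp_all add: invS_def)
  have xd: "x \<in> sdom s" using fs by simp
  have "FTree x old (Return v) \<in> set (FTree x old (Return v) # rest)" by simp
  from invT_D[OF T this] have xs: "x \<in> sstable s" "old = srho s x"
    and "\<exists>P. reach (srho s) (f x) (Return v) P \<and> P \<subseteq> sdom s \<and> (\<forall>p\<in>P. x \<in> sinfl s p)" by blast+
  then obtain P where P: "reach (srho s) (f x) (Return v) P" "P \<subseteq> sdom s" "\<forall>p\<in>P. x \<in> sinfl s p" by blast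
  have ev: "tval (srho s) (f x) = v" "tdep (srho s) (f x) = P" using reach_val[OF P(1)] by auto
  have S': "invS x0 rest s" by (rule invS_pop[OF S])
  have A': "invA f rest s" by (rule invA_intro, rule invA_D[OF A], simp)
  have T': "invT f rest s" by (rule invT_none[OF stk_pop[OF stk]]) (use rest_RL[OF stk] in blast)
  have I': "invI box f rest s"
  proof (rule invI_intro)
    fix u assume a: "u \<in> sstable s" "u \<notin> Cs rest"
    show "tdep (srho s) (f u) \<subseteq> sdom s \<and> srho s u = box (srho s u) (tval (srho s) (f u)) \<and> (\<forall>y\<in>tdep (srho s) (f u). u \<in> sinfl s y)"
    proof (cases "u = x")
      case True
      have eq: "srho s x = box (srho s x) (tval (srho s) (f x))" using nc xs(2) ev(1) by metis
      have d: "tdep (srho s) (f x) \<subseteq> sdom s" "\<forall>y\<in>tdep (srho s) (f x). x \<in> sinfl s y" using ev(2) P by auto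
      show ?thesis using True eq d by blast
    next
      case False
      then have "u \<notin> Cs (FTree x old (Return v) # rest)" using a by simp
      from invI_I1[OF II a(1) this] show ?thesis .
    qed
  next
    fix u assume a: "u \<in> sdom s" "u \<notin> sstable s"
    from invI_I2[OF II a] show "u \<in> sQ s \<or> (\<exists>r. rest = FSolve u # r)" by auto
  next
    fix w assume "w \<in> sQ s"
    from invI_QI[OF II this] show "\<exists>z. FLoop z \<in> set rest \<and> skey s w \<le> skey s z" by auto
  next
    fix F r u assume r: "rest = F # r" and nl: "\<forall>z. F \<noteq> FLoop z" and u: "u \<in> sdom s" "skey s u < skey s (fu F)"
    show "u \<in> sstable s" by (rule J_pop[OF II A K stk _ _ _ r nl u]) (use xd xs in simp_all)
  qed
  show ?thesis unfolding slrinv_def using K S' A' T' I' by simp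
qed


lemma invK_D: "invK x0 s \<Longrightarrow> finite (sdom s) \<and> x0 \<in> sdom s \<and> skey s x0 = 0 \<and>
   (\<forall>u\<in>sdom s. - int (scount s) < skey s u \<and> skey s u \<le> 0) \<and> inj_on (skey s) (sdom s) \<and>
   sstable s \<subseteq> sdom s \<and> sQ s \<subseteq> sdom s \<and> (\<forall>u. sinfl s u \<subseteq> sdom s) \<and> sQ s \<inter> sstable s = {}"
  by (simp add: invK_def)

lemma case_tree_change:
  assumes I: "slrinv box f x0 (FTree x old (Return v) # rest) s" and ch: "box old v \<noteq> srho s x"
  shows "slrinv box f x0 (FLoop x # rest)
     (s\<lparr>sQ := sQ s \<union> insert x (sinfl s x), srho := (srho s)(x := box old v),
        sinfl := (sinfl s)(x := {}), sstable := sstable s - insert x (sinfl s x)\<rparr>)"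
    (is "slrinv box f x0 ?cs ?s")
proof -
  let ?W = "insert x (sinfl s x)"
  have K: "invK x0 s" and S: "invS x0 (FTree x old (Return v) # rest) s" and A: "invA f (FTree x old (Return v) # rest) s"
    and T: "invT f (FTree x old (Return v) # rest) s"
    and II: "invI box f (FTree x old (Return v) # rest) s" using I by (simp_all add: slrinv_def)
  have stk: "stk (skey s) x0 (FTree x old (Return v) # rest)" and fs: "\<forall>F\<in>set (FTree x old (Return v) # rest). fus F \<subseteq> sdom s"
    using S by (simp_all add: invS_def)
  have xd: "x \<in> sdom s" using fs by simp
  note KD = invK_D[OF K]
  have infld: "\<And>u. sinfl s u \<subseteq> sdom s" using KD by blast
  have Wd: "?W \<subseteq> sdom s" using xd infld by blast
  have e: "sdom ?s = sdom s" "skey ?s = skey s" "sQ ?s = sQ s \<union> ?W" "srho ?s = (srho s)(x := box old v)"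
    "sinfl ?s = (sinfl s)(x := {})" "sstable ?s = sstable s - ?W" "scount ?s = scount s" by simp_all
  have KF: "\<And>x' o' y' k'. FResume x' o' y' k' \<in> set rest \<Longrightarrow>
     skey s x \<le> skey s y' \<and> skey s y' < skey s x' \<and> (\<forall>w\<in>?W. skey s w \<le> skey s y')"
  proof -
    fix x' o' y' k' assume a: "FResume x' o' y' k' \<in> set rest"
    have kk: "skey s x \<le> skey s y'" "skey s y' < skey s x'" using stk_resume[OF stk a] by simp_all
    have "FResume x' o' y' k' \<in> set (FTree x old (Return v) # rest)" using a by simp
    from invA_D[OF A this] have "\<forall>u\<in>sdom s. skey s u \<le> skey s y' \<longrightarrow> (\<forall>w\<in>sinfl s u. skey s w \<le> skey s y')" by blast
    then have "\<forall>w\<in>sinfl s x. skey s w \<le> skey s y'" using xd kk(1) by blast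
    then show "skey s x \<le> skey s y' \<and> skey s y' < skey s x' \<and> (\<forall>w\<in>?W. skey s w \<le> skey s y')" using kk by blast
  qed
  have K': "invK x0 ?s" unfolding invK_def e using KD Wd by auto
  have S': "invS x0 ?cs ?s"
    unfolding invS_def e using fs stk_replace[OF stk, of "FLoop x"] by simp
  have A': "invA f ?cs ?s"
  proof (rule invA_intro)
    fix x' o' y' k' assume "FResume x' o' y' k' \<in> set ?cs"
    then have a: "FResume x' o' y' k' \<in> set rest" by simp
    then have a2: "FResume x' o' y' k' \<in> set (FTree x old (Return v) # rest)" by simp
    note kf = KF[OF a]
    note D = invA_D[OF A a2]
    have c1: "\<forall>u\<in>sdom s. skey s u \<le> skey s y' \<longrightarrow> (\<forall>w\<in>((sinfl s)(x := {})) u. skey s w \<le> skey s y')"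
      using D by auto
    have c2: "\<forall>u\<in>sdom s. skey s y' < skey s u \<longrightarrow> skey s u < skey s x' \<longrightarrow> u \<in> sstable s - ?W"
    proof (intro ballI impI)
      fix u assume "u \<in> sdom s" "skey s y' < skey s u" "skey s u < skey s x'"
      moreover have "u \<notin> ?W" using kf \<open>skey s y' < skey s u\<close> by force
      ultimately show "u \<in> sstable s - ?W" using D by blast
    qed
    have xx: "x' \<noteq> x" using kf by auto
    have c3: "x' \<in> sstable s - ?W" using D kf by force
    have c4: "o' = ((srho s)(x := box old v)) x'" using D xx by simp
    from D obtain P where P: "reach (srho s) (f x') (Query y' k') P" "P \<subseteq> sdom s" "\<forall>p\<in>P. x' \<in> sinfl s p \<and> skey s y' < skey s p"
      by blast
    have xP: "x \<notin> P" using P(3) kf by force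
    have c5: "reach ((srho s)(x := box old v)) (f x') (Query y' k') P"
      by (rule reach_cong[OF P(1)]) (use xP in auto)
    have c6: "\<forall>p\<in>P. x' \<in> ((sinfl s)(x := {})) p \<and> skey s y' < skey s p" using P(3) xP by auto
    show "(\<forall>u\<in>sdom ?s. skey ?s u \<le> skey ?s y' \<longrightarrow> (\<forall>w\<in>sinfl ?s u. skey ?s w \<le> skey ?s y')) \<and>
     (\<forall>u\<in>sdom ?s. skey ?s y' < skey ?s u \<longrightarrow> skey ?s u < skey ?s x' \<longrightarrow> u \<in> sstable ?s) \<and>
     x' \<in> sstable ?s \<and> o' = srho ?s x' \<and>
     (\<exists>P. reach (srho ?s) (f x') (Query y' k') P \<and> P \<subseteq> sdom ?s \<and> (\<forall>p\<in>P. x' \<in> sinfl ?s p \<and> skey ?s y' < skey ?s p))"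
      unfolding e using c1 c2 c3 c4 c5 c6 P(2) by blast
  qed
  have stk': "stk (skey s) x0 ?cs" using stk_replace[OF stk, of "FLoop x"] by simp
  have T': "invT f ?cs ?s" by (rule invT_none[OF stk']) (use rest_RL[OF stk] in auto)
  have I': "invI box f ?cs ?s"
  proof (rule invI_intro)
    fix u assume a: "u \<in> sstable ?s" "u \<notin> Cs ?cs"
    have uW: "u \<notin> ?W" "u \<in> sstable s" using a unfolding e by auto
    have "u \<notin> Cs (FTree x old (Return v) # rest)" using a uW by simp
    from invI_I1[OF II uW(2) this] have D: "tdep (srho s) (f u) \<subseteq> sdom s"
      "srho s u = box (srho s u) (tval (srho s) (f u))" "\<forall>y\<in>tdep (srho s) (f u). u \<in> sinfl s y" by blast+
    have xn: "x \<notin> tdep (srho s) (f u)" using D(3) uW by blast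
    have tc: "tval ((srho s)(x := box old v)) (f u) = tval (srho s) (f u) \<and> tdep ((srho s)(x := box old v)) (f u) = tdep (srho s) (f u)"
      by (rule tree_cong) (use xn in auto)
    have ux: "u \<noteq> x" using uW by blast
    have r1: "tdep ((srho s)(x := box old v)) (f u) \<subseteq> sdom s" using tc D(1) by simp
    have r2: "((srho s)(x := box old v)) u = box (((srho s)(x := box old v)) u) (tval ((srho s)(x := box old v)) (f u))"
      using tc D(2) ux by (metis fun_upd_other)
    have r3: "\<forall>y\<in>tdep ((srho s)(x := box old v)) (f u). u \<in> ((sinfl s)(x := {})) y" using tc D(3) xn by auto
    show "tdep (srho ?s) (f u) \<subseteq> sdom ?s \<and> srho ?s u = box (srho ?s u) (tval (srho ?s) (f u)) \<and> (\<forall>y\<in>tdep (srho ?s) (f u). u \<in> sinfl ?s y)"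
      unfolding e using r1 r2 r3 by blast
  next
    fix u assume a: "u \<in> sdom ?s" "u \<notin> sstable ?s"
    show "u \<in> sQ ?s \<or> (\<exists>r. ?cs = FSolve u # r)"
    proof (cases "u \<in> ?W")
      case True then show ?thesis unfolding e by blast
    next
      case False
      then have "u \<in> sdom s" "u \<notin> sstable s" using a unfolding e by auto
      from invI_I2[OF II this] show ?thesis unfolding e by auto
    qed
  next
    fix w assume "w \<in> sQ ?s"
    then have "w \<in> sQ s \<or> w = x \<or> w \<in> sinfl s x" unfolding e by auto
    then show "\<exists>z. FLoop z \<in> set ?cs \<and> skey ?s w \<le> skey ?s z"
    proof (elim disjE)
      assume "w \<in> sQ s"
      from invI_QI[OF II this] show ?thesis unfolding e by auto
    next
      assume "w = x" then show ?thesis unfolding e by auto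
    next
      assume wi: "w \<in> sinfl s x"
      have h2: "\<forall>x' o' y' k'. FResume x' o' y' k' \<in> set rest \<longrightarrow> (\<forall>u\<in>sdom s. skey s u \<le> skey s y' \<longrightarrow> (\<forall>w\<in>sinfl s u. skey s w \<le> skey s y'))"
      proof (intro allI impI)
        fix x' o' y' k' assume "FResume x' o' y' k' \<in> set rest"
        then have "FResume x' o' y' k' \<in> set (FTree x old (Return v) # rest)" by simp
        from invA_D[OF A this] show "\<forall>u\<in>sdom s. skey s u \<le> skey s y' \<longrightarrow> (\<forall>w\<in>sinfl s u. skey s w \<le> skey s y')" by blast
      qed
      have h3: "\<forall>u\<in>sdom s. \<forall>w\<in>sinfl s u. skey s w \<le> skey s x0"
      proof (intro ballI)
        fix u w assume "u \<in> sdom s" "w \<in> sinfl s u"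
        then have "w \<in> sdom s" using infld by blast
        then show "skey s w \<le> skey s x0" using KD by auto
      qed
      have "skey s w \<le> skey s (fu (FTree x old (Return v))) \<or> (\<exists>z. FLoop z \<in> set rest \<and> skey s w \<le> skey s z)"
        by (rule cover[OF stk h2 h3 xd _ wi]) simp
      then show ?thesis unfolding e by auto
    qed
  next
    fix F r u assume "?cs = F # r" "\<forall>z. F \<noteq> FLoop z"
    then show "u \<in> sstable ?s" by auto
  qed
  show ?thesis unfolding slrinv_def using K' S' A' T' I' by simp
qed


lemma add_infl_sel[simp]:
  "sdom (add_infl x y s) = sdom s" "skey (add_infl x y s) = skey s" "sQ (add_infl x y s) = sQ s"
  "srho (add_infl x y s) = srho s" "sstable (add_infl x y s) = sstable s" "scount (add_infl x y s) = scount s"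
  "sinfl (add_infl x y s) = (sinfl s)(y := insert x (sinfl s y))"
  by (simp_all add: add_infl_def)

lemma case_advance:
  assumes K: "invK x0 s" and S: "invS x0 (F # rest) s" and A: "invA f (F # rest) s"
    and II: "invI box f (F # rest) s"
    and Fk: "fu F = x" "\<forall>z. F \<noteq> FLoop z" "\<forall>z. F \<noteq> FSolve z" and yd: "y \<in> sdom s"
    and xs: "x \<in> sstable s" "old = srho s x"
    and P: "reach (srho s) (f x) (Query y k) P" "P \<subseteq> sdom s" "\<forall>p\<in>P. x \<in> sinfl s p"
  shows "slrinv box f x0 (FTree x old (k (srho s y)) # rest) (add_infl x y s)"
    (is "slrinv box f x0 ?cs ?s")
proof -
  have stk: "stk (skey s) x0 (F # rest)" and fs: "\<forall>G\<in>set (F # rest). fus G \<subseteq> sdom s"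
    using S by (simp_all add: invS_def)
  have xd: "x \<in> sdom s" using fs Fk(1) by (cases F) auto
  note KD = invK_D[OF K]
  have infld: "\<And>u. sinfl s u \<subseteq> sdom s" using KD by blast
  have K': "invK x0 ?s" unfolding invK_def using KD xd by auto
  have S': "invS x0 ?cs ?s" unfolding invS_def using fs stk_replace[OF stk, of "FTree x old (k (srho s y))"] Fk(1) xd by simp
  have CS: "Cs ?cs = Cs (F # rest)" using Fk by (cases F) auto
  have A': "invA f ?cs ?s"
  proof (rule invA_intro)
    fix x' o' y' k' assume "FResume x' o' y' k' \<in> set ?cs"
    then have a: "FResume x' o' y' k' \<in> set rest" by simp
    then have a2: "FResume x' o' y' k' \<in> set (F # rest)" by simp
    have kk: "skey s x \<le> skey s y'" using stk_resume[OF stk a] Fk(1) by simp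
    note D = invA_D[OF A a2]
    have c1: "\<forall>u\<in>sdom s. skey s u \<le> skey s y' \<longrightarrow> (\<forall>w\<in>((sinfl s)(y := insert x (sinfl s y))) u. skey s w \<le> skey s y')"
      using D kk by auto
    from D obtain P' where P': "reach (srho s) (f x') (Query y' k') P'" "P' \<subseteq> sdom s" "\<forall>p\<in>P'. x' \<in> sinfl s p \<and> skey s y' < skey s p"
      by blast
    have c6: "\<forall>p\<in>P'. x' \<in> ((sinfl s)(y := insert x (sinfl s y))) p \<and> skey s y' < skey s p" using P'(3) by auto
    show "(\<forall>u\<in>sdom ?s. skey ?s u \<le> skey ?s y' \<longrightarrow> (\<forall>w\<in>sinfl ?s u. skey ?s w \<le> skey ?s y')) \<and>
     (\<forall>u\<in>sdom ?s. skey ?s y' < skey ?s u \<longrightarrow> skey ?s u < skey ?s x' \<longrightarrow> u \<in> sstable ?s) \<and>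
     x' \<in> sstable ?s \<and> o' = srho ?s x' \<and>
     (\<exists>P. reach (srho ?s) (f x') (Query y' k') P \<and> P \<subseteq> sdom ?s \<and> (\<forall>p\<in>P. x' \<in> sinfl ?s p \<and> skey ?s y' < skey ?s p))"
      unfolding add_infl_sel using c1 c6 P'(1,2) D by blast
  qed
  have T': "invT f ?cs ?s"
  proof (rule invT_intro)
    fix x' o' t assume a: "FTree x' o' t \<in> set ?cs"
    have "FTree x' o' t \<notin> set rest" using rest_noTree[OF stk] by blast
    then have eq: "x' = x" "o' = old" "t = k (srho s y)" using a by auto
    have r: "reach (srho s) (f x) (k (srho s y)) (insert y P)" by (rule reach_snoc[OF P(1)])
    have "\<forall>p\<in>insert y P. x \<in> ((sinfl s)(y := insert x (sinfl s y))) p" using P(3) by auto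
    then show "x' \<in> sstable ?s \<and> o' = srho ?s x' \<and> (\<exists>P. reach (srho ?s) (f x') t P \<and> P \<subseteq> sdom ?s \<and> (\<forall>p\<in>P. x' \<in> sinfl ?s p))"
      unfolding add_infl_sel eq using xs r P(2) yd by blast
  qed
  have I': "invI box f ?cs ?s"
  proof (rule invI_intro)
    fix u assume a: "u \<in> sstable ?s" "u \<notin> Cs ?cs"
    have "u \<in> sstable s" using a(1) by simp
    moreover have "u \<notin> Cs (F # rest)" unfolding CS[symmetric] by (rule a(2))
    ultimately have D: "tdep (srho s) (f u) \<subseteq> sdom s"
      "srho s u = box (srho s u) (tval (srho s) (f u))" "\<forall>y\<in>tdep (srho s) (f u). u \<in> sinfl s y"
      using invI_I1[OF II] by blast+
    have "\<forall>y'\<in>tdep (srho s) (f u). u \<in> ((sinfl s)(y := insert x (sinfl s y))) y'" using D(3) by auto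
    then show "tdep (srho ?s) (f u) \<subseteq> sdom ?s \<and> srho ?s u = box (srho ?s u) (tval (srho ?s) (f u)) \<and> (\<forall>y\<in>tdep (srho ?s) (f u). u \<in> sinfl ?s y)"
      unfolding add_infl_sel using D(1,2) by blast
  next
    fix u assume a: "u \<in> sdom ?s" "u \<notin> sstable ?s"
    then have "u \<in> sdom s" "u \<notin> sstable s" by simp_all
    from invI_I2[OF II this] Fk(3) show "u \<in> sQ ?s \<or> (\<exists>r. ?cs = FSolve u # r)" by auto
  next
    fix w assume "w \<in> sQ ?s"
    then have "w \<in> sQ s" by simp
    from invI_QI[OF II this] Fk(2) show "\<exists>z. FLoop z \<in> set ?cs \<and> skey ?s w \<le> skey ?s z" by auto
  next
    fix F' r u assume r: "?cs = F' # r" and nl: "\<forall>z. F' \<noteq> FLoop z" and u: "u \<in> sdom ?s" "skey ?s u < skey ?s (fu F')"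
    have "u \<in> sdom s" "skey s u < skey s (fu F)" using u r Fk(1) by auto
    from invI_J[OF II refl Fk(2) this] show "u \<in> sstable ?s" by simp
  qed
  show ?thesis unfolding slrinv_def using K' S' A' T' I' by simp
qed

lemma case_query_old:
  assumes I: "slrinv box f x0 (FTree x old (Query y k) # rest) s" and yd: "y \<in> sdom s"
  shows "slrinv box f x0 (FTree x old (k (srho s y)) # rest) (add_infl x y s)"
proof -
  have K: "invK x0 s" and S: "invS x0 (FTree x old (Query y k) # rest) s" and A: "invA f (FTree x old (Query y k) # rest) s"
    and T: "invT f (FTree x old (Query y k) # rest) s"
    and II: "invI box f (FTree x old (Query y k) # rest) s" using I by (simp_all add: slrinv_def)
  have "FTree x old (Query y k) \<in> set (FTree x old (Query y k) # rest)" by simp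
  from invT_D[OF T this] have xs: "x \<in> sstable s" "old = srho s x"
    and "\<exists>P. reach (srho s) (f x) (Query y k) P \<and> P \<subseteq> sdom s \<and> (\<forall>p\<in>P. x \<in> sinfl s p)" by blast+
  then obtain P where P: "reach (srho s) (f x) (Query y k) P" "P \<subseteq> sdom s" "\<forall>p\<in>P. x \<in> sinfl s p" by blast
  show ?thesis by (rule case_advance[OF K S A II _ _ _ yd xs P]) simp_all
qed

lemma case_resume:
  assumes I: "slrinv box f x0 (FResume x old y k # rest) s"
  shows "slrinv box f x0 (FTree x old (k (srho s y)) # rest) (add_infl x y s)"
proof -
  have K: "invK x0 s" and S: "invS x0 (FResume x old y k # rest) s" and A: "invA f (FResume x old y k # rest) s"
    and II: "invI box f (FResume x old y k # rest) s" using I by (simp_all add: slrinv_def)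
  have yd: "y \<in> sdom s" using S by (simp add: invS_def)
  have "FResume x old y k \<in> set (FResume x old y k # rest)" by simp
  from invA_D[OF A this] have xs: "x \<in> sstable s" "old = srho s x"
    and "\<exists>P. reach (srho s) (f x) (Query y k) P \<and> P \<subseteq> sdom s \<and> (\<forall>p\<in>P. x \<in> sinfl s p \<and> skey s y < skey s p)" by blast+
  then obtain P where P: "reach (srho s) (f x) (Query y k) P" "P \<subseteq> sdom s" "\<forall>p\<in>P. x \<in> sinfl s p" by blast
  show ?thesis by (rule case_advance[OF K S A II _ _ _ yd xs P]) simp_all
qed


lemma slr_init_sel[simp]:
  "sdom (slr_init r0 y s) = insert y (sdom s)" "skey (slr_init r0 y s) = (skey s)(y := - int (scount s))"
  "sQ (slr_init r0 y s) = sQ s" "srho (slr_init r0 y s) = (srho s)(y := r0 y)"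
  "sstable (slr_init r0 y s) = sstable s" "scount (slr_init r0 y s) = Suc (scount s)"
  "sinfl (slr_init r0 y s) = (sinfl s)(y := {y})"
  by (simp_all add: slr_init_def)

lemma stk_top_cong: assumes a: "stk k x0 (F # rest)" "\<forall>G\<in>set rest. \<forall>z\<in>fus G. k' z = k z" "k' (fu F) = k (fu F)"
  shows "stk k' x0 (F # rest)"
proof (cases rest)
  case Nil then show ?thesis using a by simp
next
  case (Cons G r)
  have s2: "stk k' x0 (G # r)" using stk_cong[of k x0 "G # r" k'] a Cons by simp
  have g: "k' (fu G) = k (fu G)" using a(2) Cons by (cases G) auto
  have g2: "\<forall>x old y kk. G = FResume x old y kk \<longrightarrow> k' y = k y \<and> k' x = k x" using a(2) Cons by auto
  show ?thesis using a Cons s2 g g2 by auto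
qed

lemma case_query_new:
  assumes I: "slrinv box f x0 (FTree x old (Query y k) # rest) s" and yn: "y \<notin> sdom s"
  shows "slrinv box f x0 (FSolve y # FResume x old y k # rest) (slr_init r0 y s)"
    (is "slrinv box f x0 ?cs ?s")
proof -
  have K: "invK x0 s" and S: "invS x0 (FTree x old (Query y k) # rest) s" and A: "invA f (FTree x old (Query y k) # rest) s"
    and T: "invT f (FTree x old (Query y k) # rest) s"
    and II: "invI box f (FTree x old (Query y k) # rest) s" using I by (simp_all add: slrinv_def)
  have stk: "stk (skey s) x0 (FTree x old (Query y k) # rest)" and fs: "\<forall>G\<in>set (FTree x old (Query y k) # rest). fus G \<subseteq> sdom s"
    using S by (simp_all add: invS_def)
  have xd: "x \<in> sdom s" using fs by simp
  note KD = invK_D[OF K]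
  have infld: "\<And>u. sinfl s u \<subseteq> sdom s" using KD by blast
  have keyb: "\<And>u. u \<in> sdom s \<Longrightarrow> - int (scount s) < skey s u \<and> skey s u \<le> 0" using KD by blast
  have yx: "y \<noteq> x" using xd yn by blast
  have "FTree x old (Query y k) \<in> set (FTree x old (Query y k) # rest)" by simp
  from invT_D[OF T this] have xs: "x \<in> sstable s" "old = srho s x"
    and "\<exists>P. reach (srho s) (f x) (Query y k) P \<and> P \<subseteq> sdom s \<and> (\<forall>p\<in>P. x \<in> sinfl s p)" by blast+
  then obtain P where P: "reach (srho s) (f x) (Query y k) P" "P \<subseteq> sdom s" "\<forall>p\<in>P. x \<in> sinfl s p" by blast
  let ?k = "(skey s)(y := - int (scount s))"
  have kd: "\<And>u. u \<in> sdom s \<Longrightarrow> ?k u = skey s u" using yn by auto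
  have K': "invK x0 ?s"
  proof -
    have a1: "finite (sdom ?s)" "x0 \<in> sdom ?s" using KD by simp_all
    have a2: "skey ?s x0 = 0" using KD yn by auto
    have a3: "\<forall>u\<in>sdom ?s. - int (scount ?s) < skey ?s u \<and> skey ?s u \<le> 0"
      using keyb yn by force
    have "?k y \<notin> ?k ` sdom s" using keyb kd by force
    then have a4: "inj_on (skey ?s) (sdom ?s)" using KD yn inj_on_cong[of "sdom s" ?k "skey s"] kd by auto
    have a5: "sstable ?s \<subseteq> sdom ?s" "sQ ?s \<subseteq> sdom ?s" "\<forall>u. sinfl ?s u \<subseteq> sdom ?s" "sQ ?s \<inter> sstable ?s = {}"
      using KD by auto
    show ?thesis unfolding invK_def using a1 a2 a3 a4 a5 by blast
  qed
  have rfus: "\<forall>G\<in>set rest. \<forall>z\<in>fus G. ?k z = skey s z"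
  proof (intro ballI)
    fix G z assume "G \<in> set rest" "z \<in> fus G"
    then have "z \<in> sdom s" using fs by auto
    then show "?k z = skey s z" by (rule kd)
  qed
  have stk1: "stk (skey s) x0 (FResume x old y k # rest)" using stk_replace[OF stk, of "FResume x old y k"] by simp
  have stk2: "stk ?k x0 (FResume x old y k # rest)" by (rule stk_top_cong[OF stk1 rfus]) (use yx in simp)
  have ky: "?k y < ?k x" using keyb[OF xd] yx by simp
  have stk': "stk ?k x0 ?cs" using stk2 ky by simp
  have S': "invS x0 ?cs ?s" unfolding invS_def using stk' fs KD yn by auto
  have A': "invA f ?cs ?s"
  proof (rule invA_intro)
    fix x' o' y' k' assume "FResume x' o' y' k' \<in> set ?cs"
    then have "FResume x' o' y' k' = FResume x old y k \<or> FResume x' o' y' k' \<in> set rest" by simp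
    then show "(\<forall>u\<in>sdom ?s. skey ?s u \<le> skey ?s y' \<longrightarrow> (\<forall>w\<in>sinfl ?s u. skey ?s w \<le> skey ?s y')) \<and>
     (\<forall>u\<in>sdom ?s. skey ?s y' < skey ?s u \<longrightarrow> skey ?s u < skey ?s x' \<longrightarrow> u \<in> sstable ?s) \<and>
     x' \<in> sstable ?s \<and> o' = srho ?s x' \<and>
     (\<exists>P. reach (srho ?s) (f x') (Query y' k') P \<and> P \<subseteq> sdom ?s \<and> (\<forall>p\<in>P. x' \<in> sinfl ?s p \<and> skey ?s y' < skey ?s p))"
    proof
      assume "FResume x' o' y' k' = FResume x old y k"
      then have eq: "x' = x" "o' = old" "y' = y" "k' = k" by simp_all
      have c1: "\<forall>u\<in>insert y (sdom s). ?k u \<le> ?k y \<longrightarrow> (\<forall>w\<in>((sinfl s)(y := {y})) u. ?k w \<le> ?k y)"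
      proof (intro ballI impI)
        fix u w assume u: "u \<in> insert y (sdom s)" "?k u \<le> ?k y" and w: "w \<in> ((sinfl s)(y := {y})) u"
        have "u = y" using u keyb yn by (cases "u = y") force+
        then show "?k w \<le> ?k y" using w by simp
      qed
      have c2: "\<forall>u\<in>insert y (sdom s). ?k y < ?k u \<longrightarrow> ?k u < ?k x \<longrightarrow> u \<in> sstable s"
      proof (intro ballI impI)
        fix u assume u: "u \<in> insert y (sdom s)" "?k y < ?k u" "?k u < ?k x"
        then have ud: "u \<in> sdom s" "u \<noteq> y" by auto
        then have "skey s u < skey s (fu (FTree x old (Query y k)))" using u(3) kd xd by simp
        from invI_J[OF II refl _ ud(1) this] show "u \<in> sstable s" by simp
      qed
      have c4: "old = ((srho s)(y := r0 y)) x" using xs yx by simp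
      have c5: "reach ((srho s)(y := r0 y)) (f x) (Query y k) P"
        by (rule reach_cong[OF P(1)]) (use P(2) yn in auto)
      have c6: "\<forall>p\<in>P. x \<in> ((sinfl s)(y := {y})) p \<and> ?k y < ?k p"
      proof
        fix p assume p: "p \<in> P"
        then have pd: "p \<in> sdom s" "p \<noteq> y" using P(2) yn by auto
        show "x \<in> ((sinfl s)(y := {y})) p \<and> ?k y < ?k p" using P(3) p pd keyb[OF pd(1)] by simp
      qed
      show ?thesis unfolding eq slr_init_sel using c1 c2 c4 c5 c6 xs(1) P(2) by blast
    next
      assume a: "FResume x' o' y' k' \<in> set rest"
      then have a2: "FResume x' o' y' k' \<in> set (FTree x old (Query y k) # rest)" by simp
      note D = invA_D[OF A a2]
      have yd': "y' \<in> sdom s" "x' \<in> sdom s" using fs a by auto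
      have c1: "\<forall>u\<in>insert y (sdom s). ?k u \<le> ?k y' \<longrightarrow> (\<forall>w\<in>((sinfl s)(y := {y})) u. ?k w \<le> ?k y')"
      proof (intro ballI impI)
        fix u w assume u: "u \<in> insert y (sdom s)" "?k u \<le> ?k y'" and w: "w \<in> ((sinfl s)(y := {y})) u"
        show "?k w \<le> ?k y'"
        proof (cases "u = y")
          case True then show ?thesis using w u(2) by simp
        next
          case False
          then have ud: "u \<in> sdom s" using u by simp
          have wd: "w \<in> sdom s" using w False infld by auto
          have "skey s u \<le> skey s y'" using u(2) kd[OF ud] kd[OF yd'(1)] by simp
          then have "skey s w \<le> skey s y'" using D ud w False by auto
          then show ?thesis using kd[OF wd] kd[OF yd'(1)] by simp
        qed
      qed
      have c2: "\<forall>u\<in>insert y (sdom s). ?k y' < ?k u \<longrightarrow> ?k u < ?k x' \<longrightarrow> u \<in> sstable s"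
      proof (intro ballI impI)
        fix u assume u: "u \<in> insert y (sdom s)" "?k y' < ?k u" "?k u < ?k x'"
        have "u \<noteq> y" using u(2) keyb[OF yd'(1)] kd[OF yd'(1)] by auto
        then have ud: "u \<in> sdom s" using u by simp
        then show "u \<in> sstable s" using D u kd[OF ud] kd[OF yd'(1)] kd[OF yd'(2)] by auto
      qed
      have xy': "x' \<noteq> y" using yd' yn by blast
      have c4: "o' = ((srho s)(y := r0 y)) x'" using D xy' by simp
      from D obtain P' where P': "reach (srho s) (f x') (Query y' k') P'" "P' \<subseteq> sdom s" "\<forall>p\<in>P'. x' \<in> sinfl s p \<and> skey s y' < skey s p"
        by blast
      have c5: "reach ((srho s)(y := r0 y)) (f x') (Query y' k') P'"
        by (rule reach_cong[OF P'(1)]) (use P'(2) yn in auto)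
      have c6: "\<forall>p\<in>P'. x' \<in> ((sinfl s)(y := {y})) p \<and> ?k y' < ?k p"
      proof
        fix p assume p: "p \<in> P'"
        then have pd: "p \<in> sdom s" "p \<noteq> y" using P'(2) yn by auto
        show "x' \<in> ((sinfl s)(y := {y})) p \<and> ?k y' < ?k p" using P'(3) p pd kd[OF pd(1)] kd[OF yd'(1)] by simp
      qed
      have c3: "x' \<in> sstable s" using D by blast
      show ?thesis unfolding slr_init_sel using c1 c2 c3 c4 c5 c6 P'(2) by blast
    qed
  qed
  have T': "invT f ?cs ?s"
  proof (rule invT_intro)
    fix x' o' t assume a: "FTree x' o' t \<in> set ?cs"
    have "FTree x' o' t \<notin> set rest" using rest_noTree[OF stk] by blast
    then show "x' \<in> sstable ?s \<and> o' = srho ?s x' \<and> (\<exists>P. reach (srho ?s) (f x') t P \<and> P \<subseteq> sdom ?s \<and> (\<forall>p\<in>P. x' \<in> sinfl ?s p))"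
      using a by simp
  qed
  have I': "invI box f ?cs ?s"
  proof (rule invI_intro)
    fix u assume a: "u \<in> sstable ?s" "u \<notin> Cs ?cs"
    have us: "u \<in> sstable s" using a by simp
    have "u \<notin> Cs (FTree x old (Query y k) # rest)" using a by simp
    from invI_I1[OF II us this] have D: "tdep (srho s) (f u) \<subseteq> sdom s"
      "srho s u = box (srho s u) (tval (srho s) (f u))" "\<forall>y\<in>tdep (srho s) (f u). u \<in> sinfl s y" by blast+
    have uy: "u \<noteq> y" using us KD yn by blast
    have yn2: "y \<notin> tdep (srho s) (f u)" using D(1) yn by blast
    have tc: "tval ((srho s)(y := r0 y)) (f u) = tval (srho s) (f u) \<and> tdep ((srho s)(y := r0 y)) (f u) = tdep (srho s) (f u)"
      by (rule tree_cong) (use yn2 in auto)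
    have r1: "tdep ((srho s)(y := r0 y)) (f u) \<subseteq> insert y (sdom s)" using tc D(1) by auto
    have r2: "((srho s)(y := r0 y)) u = box (((srho s)(y := r0 y)) u) (tval ((srho s)(y := r0 y)) (f u))"
      using tc D(2) uy by (metis fun_upd_other)
    have r3: "\<forall>y'\<in>tdep ((srho s)(y := r0 y)) (f u). u \<in> ((sinfl s)(y := {y})) y'" using tc D(3) yn2 by auto
    show "tdep (srho ?s) (f u) \<subseteq> sdom ?s \<and> srho ?s u = box (srho ?s u) (tval (srho ?s) (f u)) \<and> (\<forall>y\<in>tdep (srho ?s) (f u). u \<in> sinfl ?s y)"
      unfolding slr_init_sel using r1 r2 r3 by blast
  next
    fix u assume a: "u \<in> sdom ?s" "u \<notin> sstable ?s"
    show "u \<in> sQ ?s \<or> (\<exists>r. ?cs = FSolve u # r)"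
    proof (cases "u = y")
      case True then show ?thesis by simp
    next
      case False
      then have "u \<in> sdom s" "u \<notin> sstable s" using a by auto
      from invI_I2[OF II this] show ?thesis by simp
    qed
  next
    fix w assume "w \<in> sQ ?s"
    then have w: "w \<in> sQ s" by simp
    from invI_QI[OF II this] obtain z where z: "FLoop z \<in> set rest" "skey s w \<le> skey s z" by auto
    have "w \<in> sdom s" "z \<in> sdom s" using w KD fs z(1) by auto
    then show "\<exists>z. FLoop z \<in> set ?cs \<and> skey ?s w \<le> skey ?s z" using z kd by (intro exI[of _ z]) simp
  next
    fix F r u assume r: "?cs = F # r" and u: "u \<in> sdom ?s" "skey ?s u < skey ?s (fu F)"
    have "F = FSolve y" using r by simp
    then have "?k u < - int (scount s)" using u by simp
    moreover have "u \<noteq> y" using calculation by auto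
    ultimately show "u \<in> sstable ?s" using u keyb kd by force
  qed
  show ?thesis unfolding slrinv_def using K' S' A' T' I' by simp
qed


lemma case_loop_push:
  assumes I: "slrinv box f x0 (FLoop x # rest) s" and c: "sQ s \<noteq> {}" "skey s (qmin s) \<le> skey s x"
  shows "slrinv box f x0 (FSolve (qmin s) # FLoop x # rest) (s\<lparr>sQ := sQ s - {qmin s}\<rparr>)"
    (is "slrinv box f x0 ?cs ?s")
proof -
  let ?m = "qmin s"
  have K: "invK x0 s" and S: "invS x0 (FLoop x # rest) s" and A: "invA f (FLoop x # rest) s"
    and II: "invI box f (FLoop x # rest) s" using I by (simp_all add: slrinv_def)
  have stk: "stk (skey s) x0 (FLoop x # rest)" and fs: "\<forall>G\<in>set (FLoop x # rest). fus G \<subseteq> sdom s"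
    using S by (simp_all add: invS_def)
  note KD = invK_D[OF K]
  have fq: "finite (sQ s)" using KD finite_subset by blast
  have m: "?m \<in> sQ s" "\<forall>z\<in>sQ s. skey s ?m \<le> skey s z" using qmin_prop[OF fq c(1)] by blast+
  have md: "?m \<in> sdom s" using m KD by blast
  have e: "sdom ?s = sdom s" "skey ?s = skey s" "sQ ?s = sQ s - {?m}" "srho ?s = srho s"
    "sinfl ?s = sinfl s" "sstable ?s = sstable s" "scount ?s = scount s" by simp_all
  have K': "invK x0 ?s" unfolding invK_def e using KD by auto
  have stk': "stk (skey s) x0 ?cs" using stk c(2) by simp
  have S': "invS x0 ?cs ?s" unfolding invS_def e using stk' fs md by simp
  have A': "invA f ?cs ?s"
  proof (rule invA_intro)
    fix x' o' y' k' assume "FResume x' o' y' k' \<in> set ?cs"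
    then have "FResume x' o' y' k' \<in> set (FLoop x # rest)" by simp
    from invA_D[OF A this] show "(\<forall>u\<in>sdom ?s. skey ?s u \<le> skey ?s y' \<longrightarrow> (\<forall>w\<in>sinfl ?s u. skey ?s w \<le> skey ?s y')) \<and>
     (\<forall>u\<in>sdom ?s. skey ?s y' < skey ?s u \<longrightarrow> skey ?s u < skey ?s x' \<longrightarrow> u \<in> sstable ?s) \<and>
     x' \<in> sstable ?s \<and> o' = srho ?s x' \<and>
     (\<exists>P. reach (srho ?s) (f x') (Query y' k') P \<and> P \<subseteq> sdom ?s \<and> (\<forall>p\<in>P. x' \<in> sinfl ?s p \<and> skey ?s y' < skey ?s p))"
      unfolding e .
  qed
  have T': "invT f ?cs ?s"
  proof (rule invT_intro)
    fix x' o' t assume a: "FTree x' o' t \<in> set ?cs"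
    have "FTree x' o' t \<notin> set rest" using rest_noTree[OF stk] by blast
    then show "x' \<in> sstable ?s \<and> o' = srho ?s x' \<and> (\<exists>P. reach (srho ?s) (f x') t P \<and> P \<subseteq> sdom ?s \<and> (\<forall>p\<in>P. x' \<in> sinfl ?s p))"
      using a by simp
  qed
  have I': "invI box f ?cs ?s"
  proof (rule invI_intro)
    fix u assume a: "u \<in> sstable ?s" "u \<notin> Cs ?cs"
    then have "u \<in> sstable s" "u \<notin> Cs (FLoop x # rest)" by simp_all
    from invI_I1[OF II this]
    show "tdep (srho ?s) (f u) \<subseteq> sdom ?s \<and> srho ?s u = box (srho ?s u) (tval (srho ?s) (f u)) \<and> (\<forall>y\<in>tdep (srho ?s) (f u). u \<in> sinfl ?s y)"
      unfolding e .
  next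
    fix u assume a: "u \<in> sdom ?s" "u \<notin> sstable ?s"
    then have "u \<in> sdom s" "u \<notin> sstable s" by simp_all
    from invI_I2[OF II this] show "u \<in> sQ ?s \<or> (\<exists>r. ?cs = FSolve u # r)" unfolding e by auto
  next
    fix w assume "w \<in> sQ ?s"
    then have "w \<in> sQ s" by simp
    from invI_QI[OF II this] show "\<exists>z. FLoop z \<in> set ?cs \<and> skey ?s w \<le> skey ?s z" unfolding e by auto
  next
    fix F r u assume r: "?cs = F # r" and u: "u \<in> sdom ?s" "skey ?s u < skey ?s (fu F)"
    then have u2: "u \<in> sdom s" "skey s u < skey s ?m" by auto
    show "u \<in> sstable ?s"
    proof (rule ccontr)
      assume "u \<notin> sstable ?s"
      then have "u \<notin> sstable s" by simp
      from invI_I2[OF II u2(1) this] have "u \<in> sQ s" by simp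
      then show False using m u2 by force
    qed
  qed
  show ?thesis unfolding slrinv_def using K' S' A' T' I' by simp
qed

lemma case_loop_exit:
  assumes I: "slrinv box f x0 (FLoop x # rest) s" and c: "\<not> (sQ s \<noteq> {} \<and> skey s (qmin s) \<le> skey s x)"
  shows "slrinv box f x0 rest s"
proof -
  have K: "invK x0 s" and S: "invS x0 (FLoop x # rest) s" and A: "invA f (FLoop x # rest) s"
    and II: "invI box f (FLoop x # rest) s" using I by (simp_all add: slrinv_def)
  have stk: "stk (skey s) x0 (FLoop x # rest)" and fs: "\<forall>G\<in>set (FLoop x # rest). fus G \<subseteq> sdom s"
    using S by (simp_all add: invS_def)
  note KD = invK_D[OF K]
  have fq: "finite (sQ s)" using KD finite_subset by blast
  have big: "\<And>w. w \<in> sQ s \<Longrightarrow> skey s x < skey s w"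
  proof -
    fix w assume w: "w \<in> sQ s"
    then have "sQ s \<noteq> {}" by blast
    then have "skey s x < skey s (qmin s)" using c by simp
    moreover have "skey s (qmin s) \<le> skey s w" using qmin_prop[OF fq \<open>sQ s \<noteq> {}\<close>] w by blast
    ultimately show "skey s x < skey s w" by simp
  qed
  have S': "invS x0 rest s" by (rule invS_pop[OF S])
  have A': "invA f rest s" by (rule invA_intro, rule invA_D[OF A], simp)
  have T': "invT f rest s" by (rule invT_none[OF stk_pop[OF stk]]) (use rest_RL[OF stk] in blast)
  have I': "invI box f rest s"
  proof (rule invI_intro)
    fix u assume a: "u \<in> sstable s" "u \<notin> Cs rest"
    then have "u \<notin> Cs (FLoop x # rest)" by simp
    from invI_I1[OF II a(1) this]
    show "tdep (srho s) (f u) \<subseteq> sdom s \<and> srho s u = box (srho s u) (tval (srho s) (f u)) \<and> (\<forall>y\<in>tdep (srho s) (f u). u \<in> sinfl s y)" .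
  next
    fix u assume a: "u \<in> sdom s" "u \<notin> sstable s"
    from invI_I2[OF II a] show "u \<in> sQ s \<or> (\<exists>r. rest = FSolve u # r)" by auto
  next
    fix w assume w: "w \<in> sQ s"
    from invI_QI[OF II this] obtain z where z: "FLoop z \<in> set (FLoop x # rest)" "skey s w \<le> skey s z" by blast
    have "z \<noteq> x" using z(2) big[OF w] by auto
    then have "FLoop z \<in> set rest" using z(1) by auto
    then show "\<exists>z. FLoop z \<in> set rest \<and> skey s w \<le> skey s z" using z(2) by blast
  next
    fix F r u assume r: "rest = F # r" and nl: "\<forall>z. F \<noteq> FLoop z" and u: "u \<in> sdom s" "skey s u < skey s (fu F)"
    have "isRL F" using rest_RL[OF stk] r by simp
    then obtain x' old y kk where F: "F = FResume x' old y kk" using nl by (cases F) auto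
    have yx: "y = x" using stk r F by simp
    have "FResume x' old y kk \<in> set (FLoop x # rest)" using r F by simp
    from invA_D[OF A this] have jj: "\<forall>u\<in>sdom s. skey s y < skey s u \<longrightarrow> skey s u < skey s x' \<longrightarrow> u \<in> sstable s" by blast
    show "u \<in> sstable s"
    proof (cases "skey s u \<le> skey s x")
      case True
      show ?thesis
      proof (rule ccontr)
        assume "u \<notin> sstable s"
        from invI_I2[OF II u(1) this] have "u \<in> sQ s" by simp
        then show False using big True by force
      qed
    next
      case False
      then show ?thesis using jj u F yx by auto
    qed
  qed
  show ?thesis unfolding slrinv_def using K S' A' T' I' by simp
qed

lemma inv_step:
  assumes I: "slrinv box f x0 cs s" and st: "slr_step box f r0 (cs, s) = Some (cs', s')"
  shows "slrinv box f x0 cs' s'"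
proof (cases cs)
  case Nil then show ?thesis using st by simp
next
  case (Cons F rest)
  show ?thesis
  proof (cases F)
    case (FSolve x)
    show ?thesis
    proof (cases "x \<in> sstable s")
      case True
      then have "cs' = rest" "s' = s" using st Cons FSolve by auto
      then show ?thesis using case_solve_stable[of box f x0 x rest s] I Cons FSolve True by simp
    next
      case False
      then have "cs' = FTree x (srho s x) (f x) # rest" "s' = s\<lparr>sstable := insert x (sstable s)\<rparr>" using st Cons FSolve by auto
      then show ?thesis using case_solve_unstable[of box f x0 x rest s] I Cons FSolve False by simp
    qed
  next
    case (FTree x old t)
    show ?thesis
    proof (cases t)
      case (Return v)
      show ?thesis
      proof (cases "box old v = srho s x")
        case True
        then have "cs' = rest" "s' = s" using st Cons FTree Return by auto
        then show ?thesis using case_tree_nochange[of box f x0 x old v rest s] I Cons FTree Return True by simp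
      next
        case False
        then have "cs' = FLoop x # rest" "s' = s\<lparr>sQ := sQ s \<union> insert x (sinfl s x), srho := (srho s)(x := box old v),
        sinfl := (sinfl s)(x := {}), sstable := sstable s - insert x (sinfl s x)\<rparr>" using st Cons FTree Return by (auto simp: Let_def)
        then show ?thesis using case_tree_change[of box f x0 x old v rest s] I Cons FTree Return False by simp
      qed
    next
      case (Query y k)
      show ?thesis
      proof (cases "y \<in> sdom s")
        case True
        then have "cs' = FTree x old (k (srho s y)) # rest" "s' = add_infl x y s" using st Cons FTree Query by (auto simp: Let_def)
        then show ?thesis using case_query_old[of box f x0 x old y k rest s] I Cons FTree Query True by simp
      next
        case False
        then have "cs' = FSolve y # FResume x old y k # rest" "s' = slr_init r0 y s" using st Cons FTree Query by auto
        then show ?thesis using case_query_new[of box f x0 x old y k rest s r0] I Cons FTree Query False by simp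
      qed
    qed
  next
    case (FResume x old y k)
    then have "cs' = FTree x old (k (srho s y)) # rest" "s' = add_infl x y s" using st Cons by (auto simp: Let_def)
    then show ?thesis using case_resume[of box f x0 x old y k rest s] I Cons FResume by simp
  next
    case (FLoop x)
    show ?thesis
    proof (cases "sQ s \<noteq> {} \<and> skey s (qmin s) \<le> skey s x")
      case True
      then have "cs' = FSolve (qmin s) # FLoop x # rest" "s' = s\<lparr>sQ := sQ s - {qmin s}\<rparr>" using st Cons FLoop by auto
      then show ?thesis using case_loop_push[of box f x0 x rest s] I Cons FLoop True by simp
    next
      case False
      then have "cs' = rest" "s' = s" using st Cons FLoop by auto
      then show ?thesis using case_loop_exit[of box f x0 x rest s] I Cons FLoop False by simp
    qed
  qed
qed





lemma inv_start: "slrinv box f x0 (fst (slr_start r0 x0)) (snd (slr_start r0 x0))"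
proof -
  let ?s = "snd (slr_start r0 x0)"
  have e: "fst (slr_start r0 x0) = [FSolve x0]" "sdom ?s = {x0}" "skey ?s = (\<lambda>_. 0)(x0 := 0)" "sQ ?s = {}"
    "sstable ?s = {}" "scount ?s = 1" "sinfl ?s = (\<lambda>_. {})(x0 := {x0})"
    by (simp_all add: slr_start_def)
  have K: "invK x0 ?s" unfolding invK_def e by auto
  have S: "invS x0 [FSolve x0] ?s" unfolding invS_def e by simp
  have A: "invA f [FSolve x0] ?s" unfolding invA_def by simp
  have T: "invT f [FSolve x0] ?s" unfolding invT_def by simp
  have I: "invI box f [FSolve x0] ?s" unfolding invI_def e by auto
  show ?thesis unfolding slrinv_def e(1) using K S A T I by simp
qed

lemma inv_exec: "slrinv box f x0 (fst c) (snd c) \<Longrightarrow> slrinv box f x0 (fst (slr_exec box f r0 n c)) (snd (slr_exec box f r0 n c))"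
proof (induction n arbitrary: c)
  case 0 then show ?case by simp
next
  case (Suc n)
  show ?case
  proof (cases "slr_step box f r0 c")
    case None then show ?thesis using Suc.prems by simp
  next
    case (Some c')
    have "slr_step box f r0 (fst c, snd c) = Some (fst c', snd c')" using Some by simp
    from inv_step[OF Suc.prems this] have "slrinv box f x0 (fst c') (snd c')" .
    from Suc.IH[OF this] show ?thesis using Some by simp
  qed
qed

lemma inv_run: "slrinv box f x0 (fst (slr_run box f r0 x0 n)) (snd (slr_run box f r0 x0 n))"
  unfolding slr_run_def by (rule inv_exec[OF inv_start])

lemma inv_final:
  assumes "slrinv box f x0 [] s"
  shows "partial_box_solution box f (sdom s) (srho s) \<and> x0 \<in> sdom s"
proof -
  have K: "invK x0 s" and II: "invI box f [] s" using assms by (simp_all add: slrinv_def)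
  have Q: "sQ s = {}" using invI_QI[OF II] by fastforce
  have st: "\<And>u. u \<in> sdom s \<Longrightarrow> u \<in> sstable s"
  proof (rule ccontr)
    fix u assume "u \<in> sdom s" "u \<notin> sstable s"
    from invI_I2[OF II this] Q show False by simp
  qed
  have "\<forall>x\<in>sdom s. tdep (srho s) (f x) \<subseteq> sdom s \<and> srho s x = box (srho s x) (tval (srho s) (f x))"
  proof
    fix x assume "x \<in> sdom s"
    from invI_I1[OF II st[OF this]] show "tdep (srho s) (f x) \<subseteq> sdom s \<and> srho s x = box (srho s x) (tval (srho s) (f x))" by simp
  qed
  then show ?thesis unfolding partial_box_solution_def using K by (simp add: invK_def)
qed

theorem part1:
  "slr_finished box f r0 x0 n \<Longrightarrow>
    (let s = snd (slr_run box f r0 x0 n) in partial_box_solution box f (sdom s) (srho s) \<and> x0 \<in> sdom s)"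
  using inv_run[of box f x0 r0 n] inv_final unfolding slr_finished_def Let_def by metis





definition isupd :: "('d \<Rightarrow> 'd \<Rightarrow> 'd) \<Rightarrow> ('x,'d) frame list \<Rightarrow> ('x,'d) slr_state \<Rightarrow> 'x \<Rightarrow> bool" where
  "isupd box cs s y \<longleftrightarrow> (\<exists>old v rest. cs = FTree y old (Return v) # rest \<and> box old v \<noteq> srho s y)"

lemma step_some: "cs \<noteq> [] \<Longrightarrow> \<exists>c'. slr_step box f r0 (cs, s) = Some c'"
proof -
  assume "cs \<noteq> []"
  then obtain F rest where cs: "cs = F # rest" by (cases cs) auto
  show ?thesis
  proof (cases F)
    case (FTree x old t) then show ?thesis using cs by (cases t) (auto simp: Let_def)
  qed (use cs in \<open>auto simp: Let_def\<close>)
qed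

lemma step_cases:
  assumes st: "slr_step box f r0 (cs, s) = Some (cs', s')"
  shows "(\<exists>x old y k rest. cs = FTree x old (Query y k) # rest \<and> y \<notin> sdom s \<and> sdom s' = insert y (sdom s))
    \<or> (\<exists>y old v rest. cs = FTree y old (Return v) # rest \<and> box old v \<noteq> srho s y \<and>
          srho s' = (srho s)(y := box old v) \<and> sdom s' = sdom s \<and> skey s' = skey s)
    \<or> (sdom s' = sdom s \<and> skey s' = skey s \<and> srho s' = srho s \<and> \<not> (\<exists>y. isupd box cs s y))"
proof (cases cs)
  case Nil then show ?thesis using st by simp
next
  case (Cons F rest)
  show ?thesis
  proof (cases F)
    case (FTree x old t)
    show ?thesis
    proof (cases t)
      case (Return v)
      then show ?thesis using st Cons FTree by (cases "box old v = srho s x") (auto simp: Let_def isupd_def)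
    next
      case (Query y k)
      then show ?thesis using st Cons FTree by (cases "y \<in> sdom s") (auto simp: Let_def isupd_def)
    qed
  next
    case (FSolve x) then show ?thesis using st Cons by (cases "x \<in> sstable s") (auto simp: isupd_def)
  next
    case (FResume x old y k) then show ?thesis using st Cons by (auto simp: Let_def isupd_def)
  next
    case (FLoop x) then show ?thesis using st Cons by (cases "sQ s \<noteq> {} \<and> skey s (qmin s) \<le> skey s x") (auto simp: isupd_def)
  qed
qed

lemma step_dom_mono: "slr_step box f r0 (cs, s) = Some (cs', s') \<Longrightarrow> sdom s \<subseteq> sdom s'"
  using step_cases[of box f r0 cs s cs' s'] by auto

inductive_set trel :: "(('x,'d) qtree \<times> ('x,'d) qtree) set" where
  "(k d, Query y k) \<in> trel"

lemma wf_trel: "wf trel"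
proof (rule wfI_pf)
  fix A :: "('x,'d) qtree set" assume A: "A \<subseteq> trel `` A"
  have "\<forall>t. t \<notin> A"
  proof
    fix t show "t \<notin> A"
    proof (induction t)
      case (Return d)
      show ?case
      proof
        assume "Return d \<in> A"
        then have "Return d \<in> trel `` A" using A by blast
        then show False by (auto elim: trel.cases)
      qed
    next
      case (Query y k)
      show ?case
      proof
        assume "Query y k \<in> A"
        then have "Query y k \<in> trel `` A" using A by blast
        then obtain t' where "t' \<in> A" "(t', Query y k) \<in> trel" by blast
        then obtain d where "t' = k d" "t' \<in> A" by (auto elim: trel.cases)
        then show False using Query.IH[of "k d"] by simp
      qed
    qed
  qed
  then show "A = {}" by blast
qed

fun ttop :: "('x,'d) frame list \<Rightarrow> ('x,'d) qtree" where
  "ttop (FTree x old t # rest) = t"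
| "ttop (FResume x old y k # rest) = Query y k"
| "ttop _ = Return undefined"

definition Rm :: "((('x,'d) frame list \<times> ('x,'d) slr_state) \<times> (('x,'d) frame list \<times> ('x,'d) slr_state)) set" where
  "Rm = inv_image (less_than <*lex*> less_than <*lex*> less_than <*lex*> trel)
          (\<lambda>(cs, s). (card (sQ s), card (sdom s - sstable s), length cs, ttop cs))"

lemma wf_Rm: "wf Rm"
  unfolding Rm_def by (intro wf_inv_image wf_lex_prod wf_less_than wf_trel)

lemma step_desc:
  assumes I: "slrinv box f x0 cs s" and st: "slr_step box f r0 (cs, s) = Some (cs', s')"
    and nd: "sdom s' = sdom s" and nu: "\<not> (\<exists>y. isupd box cs s y)"
  shows "((cs', s'), (cs, s)) \<in> Rm"
proof -
  have K: "invK x0 s" and S: "invS x0 cs s" using I by (simp_all add: slrinv_def)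
  note KD = invK_D[OF K]
  have fq: "finite (sQ s)" using KD finite_subset by blast
  have fd: "finite (sdom s - sstable s)" using KD by blast
  show ?thesis
  proof (cases cs)
    case Nil then show ?thesis using st by simp
  next
    case (Cons F rest)
    have fs: "\<forall>G\<in>set cs. fus G \<subseteq> sdom s" using S by (simp add: invS_def)
    show ?thesis
    proof (cases F)
      case (FTree x old t)
      show ?thesis
      proof (cases t)
        case (Return v)
        then have "box old v = srho s x" using nu Cons FTree by (auto simp: isupd_def)
        then show ?thesis using st Cons FTree Return by (simp add: Rm_def)
      next
        case (Query y k)
        have yd: "y \<in> sdom s"
        proof (rule ccontr)
          assume "y \<notin> sdom s"
          then have "s' = slr_init r0 y s" using st Cons FTree Query by simp
          then have "sdom s' = insert y (sdom s)" by simp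
          then show False using nd \<open>y \<notin> sdom s\<close> by auto
        qed
        then have "cs' = FTree x old (k (srho s y)) # rest" "s' = add_infl x y s" using st Cons FTree Query by (auto simp: Let_def)
        then show ?thesis using Cons FTree Query by (simp add: Rm_def trel.intros)
      qed
    next
      case (FSolve x)
      show ?thesis
      proof (cases "x \<in> sstable s")
        case True then show ?thesis using st Cons FSolve by (simp add: Rm_def)
      next
        case False
        have xd: "x \<in> sdom s" using fs Cons FSolve by simp
        then have "sdom s - insert x (sstable s) \<subset> sdom s - sstable s" using False by blast
        then have "card (sdom s - insert x (sstable s)) < card (sdom s - sstable s)" using fd psubset_card_mono by blast
        moreover have "cs' = FTree x (srho s x) (f x) # rest" "s' = s\<lparr>sstable := insert x (sstable s)\<rparr>" using st Cons FSolve False by auto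
        ultimately show ?thesis using Cons FSolve by (simp add: Rm_def)
      qed
    next
      case (FResume x old y k)
      then show ?thesis using st Cons by (auto simp: Rm_def Let_def trel.intros)
    next
      case (FLoop x)
      show ?thesis
      proof (cases "sQ s \<noteq> {} \<and> skey s (qmin s) \<le> skey s x")
        case True
        then have "qmin s \<in> sQ s" using qmin_prop[OF fq] by blast
        then have "card (sQ s - {qmin s}) < card (sQ s)" using fq by (meson card_Diff1_less)
        moreover have "cs' = FSolve (qmin s) # FLoop x # rest" "s' = s\<lparr>sQ := sQ s - {qmin s}\<rparr>" using st Cons FLoop True by auto
        ultimately show ?thesis using Cons FLoop by (simp add: Rm_def)
      next
        case False
        then have "cs' = rest" "s' = s" using st Cons FLoop by (auto split: if_splits)
        then show ?thesis using Cons FLoop by (simp add: Rm_def)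
      qed
    qed
  qed
qed

lemma exec_Suc2: "slr_exec box f r0 (Suc n) c =
   (case slr_step box f r0 (slr_exec box f r0 n c) of None \<Rightarrow> slr_exec box f r0 n c | Some c' \<Rightarrow> c')"
proof (induction n arbitrary: c)
  case 0 then show ?case by (cases "slr_step box f r0 c") auto
next
  case (Suc n)
  show ?case
  proof (cases "slr_step box f r0 c")
    case None
    then have "\<And>m. slr_exec box f r0 m c = c" by (induct_tac m) auto
    then show ?thesis using None by simp
  next
    case (Some c')
    have e1: "slr_exec box f r0 (Suc (Suc n)) c = slr_exec box f r0 (Suc n) c'" using Some by simp
    have e2: "slr_exec box f r0 (Suc n) c = slr_exec box f r0 n c'" using Some by simp
    show ?thesis unfolding e1 e2 using Suc.IH[of c'] by simp
  qed
qed





lemma boxdot_nar: "b \<le> a \<Longrightarrow> boxdot wid nar a b = nar a b"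
  by (simp add: boxdot_def)
lemma boxdot_wid: "\<not> b \<le> a \<Longrightarrow> boxdot wid nar a b = wid a b"
  by (simp add: boxdot_def)
lemma boxdot_post: "is_widening wid \<Longrightarrow> a = boxdot wid nar a b \<Longrightarrow> b \<le> a"
  unfolding boxdot_def is_widening_def by (metis)

lemma mono_narrow:
  fixes f :: "'y \<Rightarrow> ('y, 'e::order) qtree"
  assumes M: "\<forall>x. monotonic_rhs (f x)" and N: "is_narrowing nar"
    and b: "b \<le> \<rho> y" "b = tval \<rho> (f y)"
    and others: "\<forall>u\<in>D. u \<noteq> y \<longrightarrow> tval \<rho> (f u) \<le> \<rho> u"
  shows "\<forall>u\<in>D. tval (\<rho>(y := nar (\<rho> y) b)) (f u) \<le> (\<rho>(y := nar (\<rho> y) b)) u"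
proof
  fix u assume u: "u \<in> D"
  have nb: "b \<le> nar (\<rho> y) b" "nar (\<rho> y) b \<le> \<rho> y" using N b(1) unfolding is_narrowing_def by blast+
  have le: "\<forall>z. (\<rho>(y := nar (\<rho> y) b)) z \<le> \<rho> z" using nb(2) by simp
  have tm: "tval (\<rho>(y := nar (\<rho> y) b)) (f u) \<le> tval \<rho> (f u)"
    using M le unfolding monotonic_rhs_def by blast
  show "tval (\<rho>(y := nar (\<rho> y) b)) (f u) \<le> (\<rho>(y := nar (\<rho> y) b)) u"
  proof (cases "u = y")
    case True then show ?thesis using tm b(2) nb(1) by (metis fun_upd_same order_trans)
  next
    case False then show ?thesis using tm others u by (metis fun_upd_other order_trans)
  qed
qed

lemma upd_facts:
  assumes I: "slrinv box f x0 cs s" and u: "isupd box cs s y" and st: "slr_step box f r0 (cs, s) = Some (cs', s')"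
  shows "srho s' = (srho s)(y := box (srho s y) (tval (srho s) (f y))) \<and> box (srho s y) (tval (srho s) (f y)) \<noteq> srho s y
     \<and> sdom s' = sdom s \<and> skey s' = skey s \<and> y \<in> sdom s \<and> (\<exists>old v rest. cs = FTree y old (Return v) # rest)"
proof -
  obtain old v rest where cs: "cs = FTree y old (Return v) # rest" and ch: "box old v \<noteq> srho s y"
    using u unfolding isupd_def by blast
  have T: "invT f cs s" and S: "invS x0 cs s" using I by (simp_all add: slrinv_def)
  have "FTree y old (Return v) \<in> set cs" using cs by simp
  from invT_D[OF T this] have o: "old = srho s y"
    and "\<exists>P. reach (srho s) (f y) (Return v) P \<and> P \<subseteq> sdom s \<and> (\<forall>p\<in>P. y \<in> sinfl s p)" by blast+
  then obtain P where "reach (srho s) (f y) (Return v) P" by blast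
  from reach_val[OF this] have vv: "tval (srho s) (f y) = v" by simp
  have yd: "y \<in> sdom s" using S cs by (simp add: invS_def)
  have s': "s' = s\<lparr>sQ := sQ s \<union> insert y (sinfl s y), srho := (srho s)(y := box old v),
        sinfl := (sinfl s)(y := {}), sstable := sstable s - insert y (sinfl s y)\<rparr>"
    using st cs ch by (simp add: Let_def)
  show ?thesis using s' ch o vv yd cs by simp
qed

lemma noupd_facts:
  assumes st: "slr_step box f r0 (cs, s) = Some (cs', s')" and nd: "sdom s' = sdom s" and nu: "\<not> (\<exists>y. isupd box cs s y)"
  shows "srho s' = srho s \<and> skey s' = skey s"
  using step_cases[OF st] nd nu unfolding isupd_def by auto





context
  fixes wid nar :: "'e::order \<Rightarrow> 'e \<Rightarrow> 'e" and f :: "'y \<Rightarrow> ('y,'e) qtree" and r0 :: "'y \<Rightarrow> 'e" and x0 :: 'y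
  assumes W: "is_widening wid" and N: "is_narrowing nar" and M: "\<forall>x. monotonic_rhs (f x)"
    and fin: "finite (\<Union>n. sdom (snd (slr_run (boxdot wid nar) f r0 x0 n)))"
    and nf: "\<forall>n. \<not> slr_finished (boxdot wid nar) f r0 x0 n"
begin

definition "Cn n = fst (slr_run (boxdot wid nar) f r0 x0 n)"
definition "Sn n = snd (slr_run (boxdot wid nar) f r0 x0 n)"

lemma step_S: "slr_step (boxdot wid nar) f r0 (Cn n, Sn n) = Some (Cn (Suc n), Sn (Suc n))"
proof -
  have ne: "Cn n \<noteq> []" using nf unfolding slr_finished_def Cn_def by blast
  obtain c' where c': "slr_step (boxdot wid nar) f r0 (Cn n, Sn n) = Some c'" using step_some[OF ne] by blast
  have e: "(Cn n, Sn n) = slr_run (boxdot wid nar) f r0 x0 n" unfolding Cn_def Sn_def by simp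
  have "slr_run (boxdot wid nar) f r0 x0 (Suc n) = c'"
    unfolding slr_run_def exec_Suc2 using c' e unfolding slr_run_def by simp
  then show ?thesis using c' unfolding Cn_def Sn_def by simp
qed

lemma invn: "slrinv (boxdot wid nar) f x0 (Cn n) (Sn n)"
  unfolding Cn_def Sn_def by (rule inv_run)

lemma dom_mono: "n \<le> m \<Longrightarrow> sdom (Sn n) \<subseteq> sdom (Sn m)"
proof -
  have "\<And>n. sdom (Sn n) \<subseteq> sdom (Sn (Suc n))" using step_dom_mono[OF step_S] by blast
  then show "n \<le> m \<Longrightarrow> sdom (Sn n) \<subseteq> sdom (Sn m)" by (rule lift_Suc_mono_le)
qed

lemma finU: "finite (\<Union>n. sdom (Sn n))" using fin unfolding Sn_def .

lemma stab: "\<exists>N. \<forall>n\<ge>N. sdom (Sn n) = sdom (Sn N)"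
proof -
  let ?U = "\<Union>n. sdom (Sn n)"
  define g where "g = (\<lambda>n. card (sdom (Sn n)))"
  have fc: "finite (range g)"
  proof (rule finite_subset[of _ "{..card ?U}"])
    show "range g \<subseteq> {..card ?U}"
    proof
      fix c assume "c \<in> range g"
      then obtain n where c: "c = g n" by blast
      have "sdom (Sn n) \<subseteq> ?U" by blast
      then have "card (sdom (Sn n)) \<le> card ?U" by (rule card_mono[OF finU])
      then show "c \<in> {..card ?U}" using c g_def by simp
    qed
  qed simp
  have ne: "range g \<noteq> {}" by simp
  have "Max (range g) \<in> range g" by (rule Max_in[OF fc ne])
  then obtain N where N: "Max (range g) = g N" by (rule rangeE)
  have "\<forall>n\<ge>N. sdom (Sn n) = sdom (Sn N)"
  proof (intro allI impI)
    fix n assume "N \<le> n"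
    then have sub: "sdom (Sn N) \<subseteq> sdom (Sn n)" by (rule dom_mono)
    have "sdom (Sn n) \<subseteq> (\<Union>n. sdom (Sn n))" by blast
    then have fn: "finite (sdom (Sn n))" using finU by (rule finite_subset)
    have "g n \<le> Max (range g)" by (rule Max_ge[OF fc]) simp
    then have c1: "card (sdom (Sn n)) \<le> card (sdom (Sn N))" using N unfolding g_def by simp
    have c2: "card (sdom (Sn N)) \<le> card (sdom (Sn n))" by (rule card_mono[OF fn sub])
    have "card (sdom (Sn N)) = card (sdom (Sn n))" using c1 c2 by simp
    then show "sdom (Sn n) = sdom (Sn N)" using card_subset_eq[OF fn sub] by simp
  qed
  then show ?thesis by blast
qed

definition "N0 = (SOME N. \<forall>n\<ge>N. sdom (Sn n) = sdom (Sn N))"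
definition "Dfix = sdom (Sn N0)"
definition "Kk = skey (Sn N0)"

lemma N0_prop: "n \<ge> N0 \<Longrightarrow> sdom (Sn n) = Dfix"
  using someI_ex[OF stab] unfolding N0_def[symmetric] Dfix_def by blast

lemma key_fix: "n \<ge> N0 \<Longrightarrow> skey (Sn n) = Kk"
proof (induction n rule: dec_induct)
  case base then show ?case by (simp add: Kk_def)
next
  case (step n)
  have "sdom (Sn (Suc n)) = sdom (Sn n)" using N0_prop step(1) by simp
  then have "skey (Sn (Suc n)) = skey (Sn n)" using step_cases[OF step_S[of n]] by auto
  then show ?case using step.IH by simp
qed

definition "upd y n = isupd (boxdot wid nar) (Cn n) (Sn n) y"
definition "val y n = tval (srho (Sn n)) (f y)"

lemma upd_n: "n \<ge> N0 \<Longrightarrow> upd y n \<Longrightarrow>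
  srho (Sn (Suc n)) = (srho (Sn n))(y := boxdot wid nar (srho (Sn n) y) (val y n)) \<and>
  boxdot wid nar (srho (Sn n) y) (val y n) \<noteq> srho (Sn n) y \<and> y \<in> Dfix \<and>
  (\<exists>old v rest. Cn n = FTree y old (Return v) # rest)"
proof -
  assume n: "n \<ge> N0" and u: "upd y n"
  from u have "isupd (boxdot wid nar) (Cn n) (Sn n) y" by (simp add: upd_def)
  from upd_facts[OF invn this step_S] have F:
    "srho (Sn (Suc n)) = (srho (Sn n))(y := boxdot wid nar (srho (Sn n) y) (tval (srho (Sn n)) (f y)))"
    "boxdot wid nar (srho (Sn n) y) (tval (srho (Sn n)) (f y)) \<noteq> srho (Sn n) y"
    "y \<in> sdom (Sn n)" "\<exists>old v rest. Cn n = FTree y old (Return v) # rest" by blast+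
  have "y \<in> Dfix" using F(3) N0_prop[OF n] by simp
  then show ?thesis using F(1,2,4) unfolding val_def by blast
qed

lemma upd_uniq: "upd y n \<Longrightarrow> upd z n \<Longrightarrow> y = z"
  unfolding upd_def isupd_def by auto

lemma noupd_n: "n \<ge> N0 \<Longrightarrow> \<not> (\<exists>y. upd y n) \<Longrightarrow> srho (Sn (Suc n)) = srho (Sn n)"
proof -
  assume n: "n \<ge> N0" and nu: "\<not> (\<exists>y. upd y n)"
  have d: "sdom (Sn (Suc n)) = sdom (Sn n)" using N0_prop[of n] N0_prop[of "Suc n"] n by simp
  have "\<not> (\<exists>y. isupd (boxdot wid nar) (Cn n) (Sn n) y)" using nu unfolding upd_def by blast
  from noupd_facts[OF step_S d this] show ?thesis by blast
qed

lemma x_const1: "n \<ge> N0 \<Longrightarrow> \<not> upd x n \<Longrightarrow> srho (Sn (Suc n)) x = srho (Sn n) x"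
proof -
  assume n: "n \<ge> N0" and nu: "\<not> upd x n"
  show ?thesis
  proof (cases "\<exists>y. upd y n")
    case True
    then obtain y where y: "upd y n" by blast
    then have "y \<noteq> x" using nu by blast
    then show ?thesis using upd_n[OF n y] by simp
  next
    case False then show ?thesis using noupd_n[OF n] by simp
  qed
qed

lemma x_const: assumes "N0 \<le> a" "a \<le> b" "\<forall>k. a \<le> k \<and> k < b \<longrightarrow> \<not> upd x k" shows "srho (Sn b) x = srho (Sn a) x"
  using assms(2,3)
proof (induction b rule: dec_induct)
  case base then show ?case by simp
next
  case (step m)
  have "srho (Sn (Suc m)) x = srho (Sn m) x" using x_const1[of m x] step assms(1) by simp
  then show ?case using step by simp
qed

lemma desc: "n \<ge> N0 \<Longrightarrow> \<not> (\<exists>y. upd y n) \<Longrightarrow> ((Cn (Suc n), Sn (Suc n)), (Cn n, Sn n)) \<in> Rm"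
proof -
  assume n: "n \<ge> N0" and nu: "\<not> (\<exists>y. upd y n)"
  have d: "sdom (Sn (Suc n)) = sdom (Sn n)" using N0_prop[of n] N0_prop[of "Suc n"] n by simp
  have "\<not> (\<exists>y. isupd (boxdot wid nar) (Cn n) (Sn n) y)" using nu unfolding upd_def by blast
  from step_desc[OF invn step_S d this] show ?thesis .
qed


lemma upd_dom: "upd y n \<Longrightarrow> y \<in> sdom (Sn n)"
proof -
  assume "upd y n"
  then obtain old v rest where c: "Cn n = FTree y old (Return v) # rest" unfolding upd_def isupd_def by blast
  have "invS x0 (Cn n) (Sn n)" using invn by (simp add: slrinv_def)
  then show ?thesis using c by (simp add: invS_def)
qed

lemma caseA: assumes A: "\<forall>y. finite {n. upd y n}" shows False
proof -
  let ?U = "\<Union>n. sdom (Sn n)"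
  have sub: "{n. \<exists>y. upd y n} \<subseteq> (\<Union>y\<in>?U. {n. upd y n})" using upd_dom by blast
  have "finite (\<Union>y\<in>?U. {n. upd y n})" using finU A by blast
  then have "finite {n. \<exists>y. upd y n}" using sub finite_subset by blast
  then obtain B where B: "{n. \<exists>y. upd y n} \<subseteq> {..<B}" by (auto simp: finite_nat_set_iff_bounded)
  define N1 where "N1 = max N0 B"
  define g where "g i = (Cn (N1 + i), Sn (N1 + i))" for i
  have "\<forall>i. (g (Suc i), g i) \<in> Rm"
  proof
    fix i
    have n: "N1 + i \<ge> N0" unfolding N1_def by simp
    have "\<not> (\<exists>y. upd y (N1 + i))"
    proof
      assume "\<exists>y. upd y (N1 + i)"
      then have "N1 + i < B" using B by blast
      then show False unfolding N1_def by simp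
    qed
    from desc[OF n this] show "(g (Suc i), g i) \<in> Rm" unfolding g_def by simp
  qed
  then show False using wf_Rm unfolding wf_iff_no_infinite_down_chain by blast
qed

lemma Kinj: "inj_on Kk Dfix"
proof -
  have "invK x0 (Sn N0)" using invn by (simp add: slrinv_def)
  then show ?thesis unfolding Kk_def Dfix_def by (simp add: invK_def)
qed

lemma finD: "finite Dfix"
proof -
  have "invK x0 (Sn N0)" using invn by (simp add: slrinv_def)
  then show ?thesis unfolding Dfix_def by (simp add: invK_def)
qed

lemma caseB: assumes B: "\<exists>y. infinite {n. upd y n}" shows False
proof -
  let ?U = "\<Union>n. sdom (Sn n)"
  define X where "X = {y. infinite {n. upd y n}}"
  have XU: "X \<subseteq> ?U"
  proof
    fix y assume "y \<in> X"
    then have "{n. upd y n} \<noteq> {}" unfolding X_def by force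
    then obtain n where "upd y n" by blast
    then show "y \<in> ?U" using upd_dom by blast
  qed
  have fX: "finite X" using finite_subset[OF XU finU] .
  have neX: "X \<noteq> {}" using B unfolding X_def by blast
  have "Max (Kk ` X) \<in> Kk ` X" using fX neX by simp
  then obtain x where xX: "x \<in> X" and xm: "Kk x = Max (Kk ` X)" by force
  have xmax: "\<And>y. y \<in> X \<Longrightarrow> Kk y \<le> Kk x" using xm fX by simp
  define Y where "Y = {y \<in> Dfix. Kk x < Kk y}"
  have fY: "finite Y" unfolding Y_def using finD by simp
  have "\<forall>y\<in>Y. finite {n. upd y n}"
  proof
    fix y assume "y \<in> Y"
    then have "y \<notin> X" using xmax unfolding Y_def by force
    then show "finite {n. upd y n}" unfolding X_def by simp
  qed
  then have "finite (\<Union>y\<in>Y. {n. upd y n})" using fY by blast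
  then obtain Bd where Bd: "(\<Union>y\<in>Y. {n. upd y n}) \<subseteq> {..<Bd}" by (auto simp: finite_nat_set_iff_bounded)
  define N2 where "N2 = max N0 Bd"
  have N2a: "N0 \<le> N2" unfolding N2_def by simp
  have h11: "\<And>n y. n \<ge> N2 \<Longrightarrow> upd y n \<Longrightarrow> Kk y \<le> Kk x"
  proof (rule ccontr)
    fix n y assume n: "n \<ge> N2" and u: "upd y n" and c: "\<not> Kk y \<le> Kk x"
    have "y \<in> Dfix" using upd_n[OF _ u] n N2a by simp
    then have "y \<in> Y" using c unfolding Y_def by simp
    then have "n < Bd" using Bd u by blast
    then show False using n unfolding N2_def by simp
  qed
  define P where "P n = (\<forall>u\<in>Dfix. Kk u \<le> Kk x \<longrightarrow> val u n \<le> srho (Sn n) u)" for n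
  let ?Dfix' = "{u\<in>Dfix. Kk u \<le> Kk x}"
  have step_gen: "\<And>n y. n \<ge> N2 \<Longrightarrow> upd y n \<Longrightarrow> val y n \<le> srho (Sn n) y \<Longrightarrow>
      (\<forall>u\<in>?Dfix'. u \<noteq> y \<longrightarrow> val u n \<le> srho (Sn n) u) \<Longrightarrow> P (Suc n)"
  proof -
    fix n y assume n: "n \<ge> N2" and u: "upd y n" and vy: "val y n \<le> srho (Sn n) y"
      and oth: "\<forall>u\<in>?Dfix'. u \<noteq> y \<longrightarrow> val u n \<le> srho (Sn n) u"
    have n0: "n \<ge> N0" using n N2a by simp
    have e: "srho (Sn (Suc n)) = (srho (Sn n))(y := nar (srho (Sn n) y) (val y n))"
      using upd_n[OF n0 u] boxdot_nar[OF vy] by simp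
    have "\<forall>u\<in>?Dfix'. tval ((srho (Sn n))(y := nar (srho (Sn n) y) (val y n))) (f u) \<le> ((srho (Sn n))(y := nar (srho (Sn n) y) (val y n))) u"
      by (rule mono_narrow[OF M N, where b="val y n" and \<rho>="srho (Sn n)" and y=y and D="?Dfix'"]) (use vy oth in \<open>simp_all add: val_def\<close>)
    then show "P (Suc n)" unfolding P_def val_def e by simp
  qed
  have hB: "\<And>n. n \<ge> N2 \<Longrightarrow> P n \<Longrightarrow> P (Suc n)"
  proof -
    fix n assume n: "n \<ge> N2" and p: "P n"
    have n0: "n \<ge> N0" using n N2a by simp
    show "P (Suc n)"
    proof (cases "\<exists>y. upd y n")
      case True
      then obtain y where u: "upd y n" by blast
      have yD: "y \<in> Dfix" using upd_n[OF n0 u] by simp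
      have "Kk y \<le> Kk x" by (rule h11[OF n u])
      then have vy: "val y n \<le> srho (Sn n) y" using p yD unfolding P_def by simp
      show ?thesis by (rule step_gen[OF n u vy]) (use p in \<open>simp add: P_def\<close>)
    next
      case False
      then have "srho (Sn (Suc n)) = srho (Sn n)" by (rule noupd_n[OF n0])
      then show ?thesis using p unfolding P_def val_def by simp
    qed
  qed
  have hA: "\<And>n. n \<ge> N2 \<Longrightarrow> upd x n \<Longrightarrow> val x n \<le> srho (Sn n) x \<Longrightarrow> P (Suc n)"
  proof -
    fix n assume n: "n \<ge> N2" and u: "upd x n" and vx: "val x n \<le> srho (Sn n) x"
    have n0: "n \<ge> N0" using n N2a by simp
    obtain old v rest where c: "Cn n = FTree x old (Return v) # rest" using upd_n[OF n0 u] by blast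
    have xD: "x \<in> Dfix" using upd_n[OF n0 u] by simp
    have I: "slrinv (boxdot wid nar) f x0 (Cn n) (Sn n)" by (rule invn)
    have II: "invI (boxdot wid nar) f (Cn n) (Sn n)" and S: "invS x0 (Cn n) (Sn n)" using I by (simp_all add: slrinv_def)
    have stk: "stk (skey (Sn n)) x0 (FTree x old (Return v) # rest)" using S c by (simp add: invS_def)
    have kf: "skey (Sn n) = Kk" by (rule key_fix[OF n0])
    have df: "sdom (Sn n) = Dfix" by (rule N0_prop[OF n0])
    have oth: "\<forall>u\<in>?Dfix'. u \<noteq> x \<longrightarrow> val u n \<le> srho (Sn n) u"
    proof (intro ballI impI)
      fix u assume uD': "u \<in> ?Dfix'" and ux: "u \<noteq> x"
      have uD: "u \<in> Dfix" and ule: "Kk u \<le> Kk x" using uD' by auto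
      have "Kk u \<noteq> Kk x" using Kinj uD xD ux unfolding inj_on_def by blast
      then have lt: "Kk u < Kk x" using ule by simp
      have nl: "\<forall>z. FTree x old (Return v) \<noteq> FLoop z" by simp
      have ust: "u \<in> sstable (Sn n)"
        by (rule invI_J[OF II c nl]) (use uD lt kf df in simp_all)
      have unc: "u \<notin> Cs (Cn n)"
      proof
        assume "u \<in> Cs (Cn n)"
        then have "u \<in> Cs rest" using c ux by simp
        then obtain o' y' k' where r: "FResume u o' y' k' \<in> set rest"
          unfolding Cs_def using rest_noTree[OF stk] by blast
        from stk_resume[OF stk r] have "skey (Sn n) x \<le> skey (Sn n) y'" "skey (Sn n) y' < skey (Sn n) u" by simp_all
        then show False using lt kf by simp
      qed
      from invI_I1[OF II ust unc] have "srho (Sn n) u = boxdot wid nar (srho (Sn n) u) (tval (srho (Sn n)) (f u))" by blast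
      from boxdot_post[OF W this] show "val u n \<le> srho (Sn n) u" unfolding val_def .
    qed
    show "P (Suc n)" by (rule step_gen[OF n u vx oth])
  qed
  have infx: "\<forall>m. \<exists>k>m. upd x k"
  proof (rule ccontr)
    assume "\<not> (\<forall>m. \<exists>k>m. upd x k)"
    then obtain m where m: "\<forall>k>m. \<not> upd x k" by blast
    have "{n. upd x n} \<subseteq> {..m}" using m not_le by blast
    then have "finite {n. upd x n}" using finite_subset by blast
    then show False using xX unfolding X_def by simp
  qed
  define nxt where "nxt m = (LEAST k. m < k \<and> upd x k)" for m
  have hnxt: "\<And>m. m < nxt m \<and> upd x (nxt m) \<and> (\<forall>k. m < k \<longrightarrow> k < nxt m \<longrightarrow> \<not> upd x k)"
  proof -
    fix m
    have ex: "\<exists>k. m < k \<and> upd x k" using infx by blast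
    have "m < nxt m \<and> upd x (nxt m)" unfolding nxt_def by (rule LeastI_ex[OF ex])
    moreover have "\<forall>k. m < k \<longrightarrow> k < nxt m \<longrightarrow> \<not> upd x k" unfolding nxt_def using not_less_Least by blast
    ultimately show "m < nxt m \<and> upd x (nxt m) \<and> (\<forall>k. m < k \<longrightarrow> k < nxt m \<longrightarrow> \<not> upd x k)" by blast
  qed
  have chain: "\<And>m. m \<ge> N0 \<Longrightarrow> upd x m \<Longrightarrow>
      srho (Sn (nxt m)) x = boxdot wid nar (srho (Sn m) x) (val x m) \<and> boxdot wid nar (srho (Sn m) x) (val x m) \<noteq> srho (Sn m) x"
  proof -
    fix m assume m: "m \<ge> N0" and u: "upd x m"
    have c1: "srho (Sn (nxt m)) x = srho (Sn (Suc m)) x"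
    proof (rule x_const)
      show "N0 \<le> Suc m" using m by simp
      show "Suc m \<le> nxt m" using hnxt[of m] by simp
      show "\<forall>k. Suc m \<le> k \<and> k < nxt m \<longrightarrow> \<not> upd x k" using hnxt[of m] by auto
    qed
    show "srho (Sn (nxt m)) x = boxdot wid nar (srho (Sn m) x) (val x m) \<and> boxdot wid nar (srho (Sn m) x) (val x m) \<noteq> srho (Sn m) x"
      using c1 upd_n[OF m u] by simp
  qed
  show False
  proof (cases "\<exists>n\<ge>N2. upd x n \<and> val x n \<le> srho (Sn n) x")
    case True
    then obtain n0 where n0: "n0 \<ge> N2" "upd x n0" "val x n0 \<le> srho (Sn n0) x" by blast
    have P1: "P (Suc n0)" by (rule hA[OF n0])
    have Pall: "\<And>m. m \<ge> Suc n0 \<Longrightarrow> P m"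
    proof -
      fix m assume "m \<ge> Suc n0"
      then show "P m"
      proof (induction m rule: dec_induct)
        case base then show ?case by (rule P1)
      next
        case (step m) then show ?case using hB[of m] n0(1) by simp
      qed
    qed
    define e where "e j = (nxt ^^ j) n0" for j
    have e0: "e 0 = n0" and eS: "\<And>j. e (Suc j) = nxt (e j)" unfolding e_def by simp_all
    have ege: "\<And>j. n0 \<le> e j \<and> upd x (e j)"
    proof -
      fix j show "n0 \<le> e j \<and> upd x (e j)"
      proof (induction j)
        case 0 then show ?case using e0 n0 by simp
      next
        case (Suc j) then show ?case using eS[of j] hnxt[of "e j"] by auto
      qed
    qed
    define a where "a j = srho (Sn (e j)) x" for j
    define b where "b j = val x (e j)" for j
    have xD: "x \<in> Dfix" using upd_n[OF _ n0(2)] n0(1) N2a by simp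
    have hb: "\<And>j. b j \<le> a j"
    proof -
      fix j show "b j \<le> a j"
      proof (cases j)
        case 0 then show ?thesis using n0 e0 unfolding a_def b_def by simp
      next
        case (Suc j')
        have "e j' < e j" using Suc eS[of j'] hnxt[of "e j'"] by simp
        then have "e j \<ge> Suc n0" using ege[of j'] by simp
        then have "P (e j)" by (rule Pall)
        then show ?thesis using xD unfolding P_def a_def b_def by simp
      qed
    qed
    have hab: "\<And>j. b j \<le> a j \<and> a (Suc j) = nar (a j) (b j) \<and> a (Suc j) \<noteq> a j"
    proof -
      fix j
      have m: "e j \<ge> N0" using ege[of j] n0(1) N2a by simp
      from chain[OF m] ege[of j] have "a (Suc j) = boxdot wid nar (a j) (b j) \<and> boxdot wid nar (a j) (b j) \<noteq> a j"
        unfolding a_def b_def eS by simp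
      then show "b j \<le> a j \<and> a (Suc j) = nar (a j) (b j) \<and> a (Suc j) \<noteq> a j"
        using hb[of j] boxdot_nar[OF hb[of j], of wid nar] by simp
    qed
    then show False using N unfolding is_narrowing_def by blast
  next
    case False
    define e where "e j = (nxt ^^ j) (nxt N2)" for j
    have eS: "\<And>j. e (Suc j) = nxt (e j)" unfolding e_def by (simp add: funpow_swap1)
    have ege: "\<And>j. N2 \<le> e j \<and> upd x (e j)"
    proof -
      fix j show "N2 \<le> e j \<and> upd x (e j)"
      proof (induction j)
        case 0 then show ?case using hnxt[of N2] unfolding e_def by simp
      next
        case (Suc j) then show ?case using eS[of j] hnxt[of "e j"] by auto
      qed
    qed
    define a where "a j = srho (Sn (e j)) x" for j
    define b where "b j = val x (e j)" for j
    have hab: "\<And>j. a (Suc j) = wid (a j) (b j) \<and> a (Suc j) \<noteq> a j"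
    proof -
      fix j
      have m: "e j \<ge> N0" using ege[of j] N2a by simp
      have nb: "\<not> b j \<le> a j" using False ege[of j] unfolding a_def b_def by blast
      from chain[OF m] ege[of j] have "a (Suc j) = boxdot wid nar (a j) (b j) \<and> boxdot wid nar (a j) (b j) \<noteq> a j"
        unfolding a_def b_def eS by simp
      then show "a (Suc j) = wid (a j) (b j) \<and> a (Suc j) \<noteq> a j"
        using boxdot_wid[OF nb, of wid nar] by simp
    qed
    then show False using W unfolding is_widening_def by blast
  qed
qed

lemma contra: False
  using caseA caseB by blast

end





lemma post_of_box: "is_widening wid \<Longrightarrow> partial_box_solution (boxdot wid nar) f A r \<Longrightarrow> partial_post_solution f A r"
  unfolding partial_box_solution_def partial_post_solution_def using boxdot_post by blast

theorem mainTheorem6: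
  shows
   "(\<forall>(box :: 'd \<Rightarrow> 'd \<Rightarrow> 'd) (f :: 'x \<Rightarrow> ('x, 'd) qtree) \<rho>0 x0 n.
       slr_finished box f \<rho>0 x0 n \<longrightarrow>
         (let s = snd (slr_run box f \<rho>0 x0 n) in
            partial_box_solution box f (sdom s) (srho s) \<and> x0 \<in> sdom s))
    \<and>
    (\<forall>(wid :: 'e::order \<Rightarrow> 'e \<Rightarrow> 'e) nar (f :: 'y \<Rightarrow> ('y, 'e) qtree) \<rho>0 x0.
       directed TYPE('e) \<longrightarrow> is_widening wid \<longrightarrow> is_narrowing nar \<longrightarrow>
       (\<forall>x. monotonic_rhs (f x)) \<longrightarrow>
       finite (\<Union>n. sdom (snd (slr_run (boxdot wid nar) f \<rho>0 x0 n))) \<longrightarrow>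
       (\<exists>n. slr_finished (boxdot wid nar) f \<rho>0 x0 n \<and>
            (let s = snd (slr_run (boxdot wid nar) f \<rho>0 x0 n) in
               partial_post_solution f (sdom s) (srho s) \<and> x0 \<in> sdom s)))"
proof (intro conjI allI impI)
  fix box :: "'d \<Rightarrow> 'd \<Rightarrow> 'd" and f :: "'x \<Rightarrow> ('x, 'd) qtree" and \<rho>0 x0 n
  assume "slr_finished box f \<rho>0 x0 n"
  then show "let s = snd (slr_run box f \<rho>0 x0 n) in partial_box_solution box f (sdom s) (srho s) \<and> x0 \<in> sdom s"
    by (rule part1)
next
  fix wid nar :: "'e::order \<Rightarrow> 'e \<Rightarrow> 'e" and f :: "'y \<Rightarrow> ('y, 'e) qtree" and \<rho>0 x0
  assume W: "is_widening wid" and N: "is_narrowing nar" and M: "\<forall>x. monotonic_rhs (f x)"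
    and fin: "finite (\<Union>n. sdom (snd (slr_run (boxdot wid nar) f \<rho>0 x0 n)))"
  have "\<exists>n. slr_finished (boxdot wid nar) f \<rho>0 x0 n"
  proof (rule ccontr)
    assume "\<not> (\<exists>n. slr_finished (boxdot wid nar) f \<rho>0 x0 n)"
    then have "\<forall>n. \<not> slr_finished (boxdot wid nar) f \<rho>0 x0 n" by blast
    from contra[OF W N M fin this] show False .
  qed
  then obtain n where fn: "slr_finished (boxdot wid nar) f \<rho>0 x0 n" by blast
  from part1[OF fn] have "partial_box_solution (boxdot wid nar) f (sdom (snd (slr_run (boxdot wid nar) f \<rho>0 x0 n))) (srho (snd (slr_run (boxdot wid nar) f \<rho>0 x0 n)))
     \<and> x0 \<in> sdom (snd (slr_run (boxdot wid nar) f \<rho>0 x0 n))" by (simp add: Let_def)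
  then show "\<exists>n. slr_finished (boxdot wid nar) f \<rho>0 x0 n \<and>
            (let s = snd (slr_run (boxdot wid nar) f \<rho>0 x0 n) in
               partial_post_solution f (sdom s) (srho s) \<and> x0 \<in> sdom s)"
    using fn post_of_box[OF W] by (metis)
qed



end
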